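(* Consider DTR with heuristic $h_{e^*}$ during the backward pass of the linear feedforward network (as in the context). Suppose that, to compute all of the gradients associated with an evicted path of $L_k$ forward tensors (a maximal run of consecutive non-resident forward tensors, the resident forward tensor preceding it remaining in memory until banished), DTR has $2+k$ units of free memory. Then the number of (re)computations needed to compute all these gradients is $\mathcal{O}\!\left(L_k + \frac{L_k^2}{k^2}\log k\right)$.
   Context: Linear feedforward network: tensors $t_0, \dots, t_N$ and gradient tensors $\hat t_1, \dots, \hat t_N$; $t_0$ is always resident and free. $t_i = f_i(t_{i-1})$ for $1\le i\le N$; $\hat t_N = \hat f_N(t_{N-1})$, $\hat t_i = \hat f_i(t_{i-1}, \hat t_{i+1})$ for $2 \le i \le N-1$, $\hat t_1 = \hat f_1(\hat t_2)$. Unit memory per tensor, unit cost per operator. The program computes $t_1,\dots,t_N$ then $\hat t_N,\dots,\hat t_1$. The gradients associated with forward tensors $t_{a+1},\dots,t_{b}$ are the gradients $\hat t_i$ whose computation requires these forward tensors as input. DTR executes operations online in order; evicted inputs are rematerialized by recursively re-executing producing operations; inputs of an operation being (re)performed are locked; when memory is full DTR evicts an evictable resident tensor with minimal heuristic score. A tensor is live while some pending program operation uses it; once not live and all tensors directly computed from it are resident or banished, it is banished (permanently freed) and its children become unevictable. Heuristic $h_{e^*}(t) = |e^*(t)|$, where $e^*(t)$ is the set of currently evicted (computed, not banished) tensors reachable from $t$ backwards or forwards along dependency edges through evicted tensors only; not-yet-computed tensors are not considered. *)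

theory Defs
  imports Complex_Main
begin

text \<open>
Isolated model of the backward pass over one evicted path.
Forward tensors of the path are numbered 1..L (x_i stands for t_(a+i));
x_0 stands for the resident tensor t_a preceding the path: it is always
resident, never evictable and not charged to the memory budget.
Gradient g_j (j = L down to 1) stands for the gradient hat t_(a+j+1); it is
computed from x_j and g_(j+1).  g_(L+1) is resident at the start.
Memory budget for path tensors and gradients: 2 + k units.
While gradient g_j is being computed, x_(j+1),...,x_L are banished and
exactly one gradient (g_(j+1)) occupies memory; gradients are unevictable
(their parents are banished).  R is the set of resident path tensors.
\<close>

definition evicted :: "nat \<Rightarrow> nat set \<Rightarrow> nat set" where
  "evicted j R = {i. 1 \<le> i \<and> i \<le> j \<and> i \<notin> R}"

text \<open>Heuristic h_{e*}: number of evicted tensors reachable from t through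
evicted tensors only (on the chain; gradients are never evicted).\<close>
definition escore :: "nat \<Rightarrow> nat set \<Rightarrow> nat \<Rightarrow> nat" where
  "escore j R t = card {i \<in> evicted j R.
      (i < t \<and> {i..<t} \<subseteq> evicted j R) \<or> (t < i \<and> {t<..i} \<subseteq> evicted j R)}"

definition evict_step :: "nat \<Rightarrow> nat \<Rightarrow> nat set \<Rightarrow> nat set \<Rightarrow> bool" where
  "evict_step j lock R R' \<longleftrightarrow>
     (\<exists>t. t \<in> R \<and> t \<noteq> lock \<and>
          (\<forall>u\<in>R. u \<noteq> lock \<longrightarrow> escore j R t \<le> escore j R u) \<and>
          R' = R - {t})"

text \<open>Make room for one new tensor: memory in use is 1 (gradient g_(j+1))
plus card R; evict while 1 + card R + 1 > 2 + k.\<close>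
inductive alloc :: "nat \<Rightarrow> nat \<Rightarrow> nat \<Rightarrow> nat set \<Rightarrow> nat set \<Rightarrow> bool" where
  alloc_done: "card R \<le> k \<Longrightarrow> alloc k j lock R R"
| alloc_evict: "card R > k \<Longrightarrow> evict_step j lock R R1 \<Longrightarrow> alloc k j lock R1 R2
                 \<Longrightarrow> alloc k j lock R R2"

text \<open>Rematerialization of x_i (recursively), with cost = number of
operator executions.  The input x_(i-1) is locked while x_i is computed.\<close>
inductive mat :: "nat \<Rightarrow> nat \<Rightarrow> nat \<Rightarrow> nat set \<Rightarrow> nat set \<Rightarrow> nat \<Rightarrow> bool" where
  mat_res: "i = 0 \<or> i \<in> R \<Longrightarrow> mat k j i R R 0"
| mat_comp: "1 \<le> i \<Longrightarrow> i \<notin> R \<Longrightarrow> mat k j (i - 1) R R1 c \<Longrightarrow>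
              alloc k j (i - 1) R1 R2 \<Longrightarrow> mat k j i R (insert i R2) (Suc c)"

text \<open>Computing gradient g_j: materialize x_j, allocate g_j (x_j locked),
compute g_j, then g_(j+1) and x_j are banished.\<close>
inductive grad_step :: "nat \<Rightarrow> nat \<Rightarrow> nat set \<Rightarrow> nat set \<Rightarrow> nat \<Rightarrow> bool" where
  "mat k j j R R1 c \<Longrightarrow> alloc k j j R1 R2 \<Longrightarrow> grad_step k j R (R2 - {j}) (Suc c)"

inductive dtr_run :: "nat \<Rightarrow> nat \<Rightarrow> nat set \<Rightarrow> nat \<Rightarrow> bool" where
  run_done: "dtr_run k 0 R 0"
| run_step: "1 \<le> j \<Longrightarrow> grad_step k j R R1 c1 \<Longrightarrow> dtr_run k (j - 1) R1 c2
              \<Longrightarrow> dtr_run k j R (c1 + c2)"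

end

theory Submission imports Defs begin

definition gpred :: "nat set \<Rightarrow> nat \<Rightarrow> nat" where
  "gpred S x = Max (insert 0 {y\<in>S. y < x})"
definition gap :: "nat set \<Rightarrow> nat \<Rightarrow> nat" where
  "gap S x = x - gpred S x - 1"
definition gsucc :: "nat set \<Rightarrow> nat \<Rightarrow> nat" where
  "gsucc S x = Min {y\<in>S. x < y}"
definition gscore :: "nat set \<Rightarrow> nat \<Rightarrow> nat" where
  "gscore S t = gap S t + gap S (gsucc S t)"
definition idx :: "nat set \<Rightarrow> nat \<Rightarrow> nat" where
  "idx S x = card {y\<in>S. y \<le> x}"

lemma gpred_ge: "finite S \<Longrightarrow> y \<in> S \<Longrightarrow> y < x \<Longrightarrow> y \<le> gpred S x"
  unfolding gpred_def by (rule Max_ge) auto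

lemma gpred_cases: "finite S \<Longrightarrow> gpred S x = 0 \<or> (gpred S x \<in> S \<and> gpred S x < x)"
proof -
  assume f: "finite S"
  have "gpred S x \<in> insert 0 {y\<in>S. y < x}" unfolding gpred_def
    by (rule Max_in) (use f in auto)
  then show ?thesis by auto
qed

lemma gpred_lt: "finite S \<Longrightarrow> 0 < x \<Longrightarrow> gpred S x < x"
  using gpred_cases by force

lemma gpred_eqI:
  assumes "finite S" "p = 0 \<or> p \<in> S" "p < x" "\<And>y. y \<in> S \<Longrightarrow> y < x \<Longrightarrow> y \<le> p"
  shows "gpred S x = p"
  unfolding gpred_def
  by (rule Max_eqI) (use assms in auto)

lemma gpred_cong: "{y\<in>S. y < x} = {y\<in>T. y < x} \<Longrightarrow> gpred S x = gpred T x"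
  unfolding gpred_def by simp

lemma no_between: "finite S \<Longrightarrow> gpred S x < y \<Longrightarrow> y < x \<Longrightarrow> y \<notin> S"
  using gpred_ge by force

lemma gsucc_props:
  assumes "finite S" "y \<in> S" "t < y"
  shows "gsucc S t \<in> S" "t < gsucc S t" "gsucc S t \<le> y"
proof -
  have ne: "{z\<in>S. t < z} \<noteq> {}" using assms by blast
  have fin: "finite {z\<in>S. t < z}" using assms by simp
  have "gsucc S t \<in> {z\<in>S. t < z}" unfolding gsucc_def using Min_in[OF fin ne] .
  then show "gsucc S t \<in> S" "t < gsucc S t" by simp_all
  have "y \<in> {z\<in>S. t < z}" using assms by simp
  then show "gsucc S t \<le> y" unfolding gsucc_def using Min_le[OF fin] by blast
qed

lemma gsucc_le: "finite S \<Longrightarrow> y \<in> S \<Longrightarrow> t < y \<Longrightarrow> gsucc S t \<le> y"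
  by (rule gsucc_props(3))

lemma gsucc_eqI:
  assumes "finite S" "s \<in> S" "t < s" "\<And>y. y \<in> S \<Longrightarrow> t < y \<Longrightarrow> s \<le> y"
  shows "gsucc S t = s"
  unfolding gsucc_def
proof (rule Min_eqI)
  show "finite {y \<in> S. t < y}" using assms(1) by simp
  show "s \<in> {y \<in> S. t < y}" using assms(2,3) by simp
  fix y assume "y \<in> {y \<in> S. t < y}" then show "s \<le> y" using assms(4) by simp
qed

lemma no_between_succ: "finite S \<Longrightarrow> y \<in> S \<Longrightarrow> t < y \<Longrightarrow> t < z \<Longrightarrow> z < gsucc S t \<Longrightarrow> z \<notin> S"
  using gsucc_le by force

lemma gpred_gsucc:
  assumes "finite S" "t \<in> S" "y \<in> S" "t < y"
  shows "gpred S (gsucc S t) = t"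
proof (rule gpred_eqI)
  show "finite S" by fact
  show "t = 0 \<or> t \<in> S" using assms by auto
  show "t < gsucc S t" using gsucc_props[OF assms(1,3,4)] by auto
  fix z assume "z \<in> S" "z < gsucc S t"
  then show "z \<le> t" using no_between_succ[OF assms(1,3,4), of z] by force
qed

lemma gsucc_gpred:
  assumes "finite S" "x \<in> S" "gpred S x \<in> S" "0 < x"
  shows "gsucc S (gpred S x) = x"
proof (rule gsucc_eqI)
  show "finite S" "x \<in> S" by fact+
  show "gpred S x < x" using gpred_lt assms by auto
  fix y assume "y \<in> S" "gpred S x < y"
  then show "x \<le> y" using no_between[OF assms(1), of x y] by force
qed

lemma gpred_remove:
  assumes "finite S" "0 \<notin> S" "t \<in> S" "x \<in> S" "x \<noteq> t"
  shows "gpred (S - {t}) x = (if gpred S x = t then gpred S t else gpred S x)"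
proof -
  have x0: "0 < x" using assms by (cases x) auto
  have t0: "0 < t" using assms by (cases t) auto
  have fS': "finite (S - {t})" using assms by auto
  show ?thesis
  proof (cases "gpred S x = t")
    case True
    have "gpred (S - {t}) x = gpred S t"
    proof (rule gpred_eqI[OF fS'])
      have "gpred S t = 0 \<or> gpred S t \<in> S \<and> gpred S t < t" using gpred_cases[OF assms(1)] .
      then show "gpred S t = 0 \<or> gpred S t \<in> S - {t}" by auto
      show "gpred S t < x" using gpred_lt[OF assms(1) t0] True gpred_lt[OF assms(1) x0] by simp
      fix y assume y: "y \<in> S - {t}" "y < x"
      then have "y \<le> t" using gpred_ge[OF assms(1), of y x] True by auto
      then have "y < t" using y by auto
      then show "y \<le> gpred S t" using gpred_ge[OF assms(1)] y by auto
    qed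
    then show ?thesis using True by simp
  next
    case False
    have "gpred (S - {t}) x = gpred S x"
    proof (rule gpred_eqI[OF fS'])
      show "gpred S x = 0 \<or> gpred S x \<in> S - {t}" using gpred_cases[OF assms(1), of x] False by auto
      show "gpred S x < x" using gpred_lt[OF assms(1) x0] .
      fix y assume y: "y \<in> S - {t}" "y < x"
      then show "y \<le> gpred S x" using gpred_ge[OF assms(1)] by auto
    qed
    then show ?thesis using False by simp
  qed
qed

lemma gap_remove:
  assumes "finite S" "0 \<notin> S" "t \<in> S" "x \<in> S" "x \<noteq> t"
  shows "gap (S - {t}) x = (if gpred S x = t then gap S t + 1 + gap S x else gap S x)"
proof -
  have x0: "0 < x" using assms by (cases x) auto
  have t0: "0 < t" using assms by (cases t) auto
  have a: "gpred S x < x" using gpred_lt[OF assms(1) x0] .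
  have b: "gpred S t < t" using gpred_lt[OF assms(1) t0] .
  show ?thesis unfolding gap_def gpred_remove[OF assms] using a b by auto
qed

lemma gsucc_remove:
  assumes "finite S" "t \<in> S" "x \<in> S - {t}" "y \<in> S - {t}" "x < y"
  shows "gsucc (S - {t}) x = (if gsucc S x = t then gsucc S t else gsucc S x)"
proof -
  have fS': "finite (S - {t})" using assms by auto
  have sx: "gsucc S x \<in> S" "x < gsucc S x" "gsucc S x \<le> y" using gsucc_props[of S y x] assms by auto
  show ?thesis
  proof (cases "gsucc S x = t")
    case True
    have ty: "t < y" using sx True assms by auto
    have st: "gsucc S t \<in> S" "t < gsucc S t" "gsucc S t \<le> y" using gsucc_props[OF assms(1) _ ty] assms by auto
    have "gsucc (S - {t}) x = gsucc S t"
    proof (rule gsucc_eqI[OF fS'])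
      show "gsucc S t \<in> S - {t}" using st by auto
      show "x < gsucc S t" using st sx True by auto
      fix z assume z: "z \<in> S - {t}" "x < z"
      then have "t \<le> z" using gsucc_le[OF assms(1), of z x] True by auto
      then have "t < z" using z by auto
      then show "gsucc S t \<le> z" using gsucc_le[OF assms(1)] z by auto
    qed
    then show ?thesis using True by simp
  next
    case False
    have "gsucc (S - {t}) x = gsucc S x"
    proof (rule gsucc_eqI[OF fS'])
      show "gsucc S x \<in> S - {t}" using sx False by auto
      show "x < gsucc S x" using sx by auto
      fix z assume z: "z \<in> S - {t}" "x < z"
      then show "gsucc S x \<le> z" using gsucc_le[OF assms(1)] by auto
    qed
    then show ?thesis using False by simp
  qed
qed

lemma gpred_insert_above:
  assumes "\<forall>y\<in>S. y < a" "x < a"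
  shows "gpred (insert a S) x = gpred S x"
  by (rule gpred_cong) (use assms in auto)

lemma gap_insert_above:
  assumes "\<forall>y\<in>S. y < a" "x < a"
  shows "gap (insert a S) x = gap S x"
  unfolding gap_def using gpred_insert_above[OF assms] by simp

lemma gsucc_insert_above:
  assumes "finite S" "\<forall>y\<in>S. y < a" "x \<in> S" "y \<in> S" "x < y"
  shows "gsucc (insert a S) x = gsucc S x"
proof -
  have sx: "gsucc S x \<in> S" "x < gsucc S x" using gsucc_props[OF assms(1,4,5)] by auto
  show ?thesis
  proof (rule gsucc_eqI)
    show "finite (insert a S)" using assms by auto
    show "gsucc S x \<in> insert a S" "x < gsucc S x" using sx by auto
    fix z assume "z \<in> insert a S" "x < z"
    then show "gsucc S x \<le> z" using gsucc_le[OF assms(1)] sx assms(2) by (auto intro: less_imp_le)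
  qed
qed

lemma prefix_sum:
  assumes "finite S" "0 \<notin> S"
  shows "b \<in> S \<or> b = 0 \<Longrightarrow> (\<Sum>x\<in>{y\<in>S. y \<le> b}. gap S x) + card {y\<in>S. y \<le> b} = b"
proof (induction b rule: less_induct)
  case (less b)
  show ?case
  proof (cases "b = 0")
    case True
    have e: "{y\<in>S. y \<le> b} = {}" using True assms(2) by (auto simp: le_zero_eq)
    show ?thesis unfolding e using True by simp
  next
    case False
    then have bS: "b \<in> S" using less.prems by auto
    let ?p = "gpred S b"
    have pl: "?p < b" using gpred_lt[OF assms(1)] False by auto
    have pc: "?p \<in> S \<or> ?p = 0" using gpred_cases[OF assms(1), of b] by auto
    have eq: "{y\<in>S. y \<le> b} = insert b {y\<in>S. y \<le> ?p}"
      using bS pl gpred_ge[OF assms(1), of _ b] by force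
    have nb: "b \<notin> {y\<in>S. y \<le> ?p}" using pl by auto
    have fin: "finite {y\<in>S. y \<le> ?p}" using assms by auto
    have IH: "(\<Sum>x\<in>{y\<in>S. y \<le> ?p}. gap S x) + card {y\<in>S. y \<le> ?p} = ?p"
      using less.IH[OF pl pc] .
    have "(\<Sum>x\<in>{y\<in>S. y \<le> b}. gap S x) + card {y\<in>S. y \<le> b}
        = gap S b + ((\<Sum>x\<in>{y\<in>S. y \<le> ?p}. gap S x) + card {y\<in>S. y \<le> ?p}) + 1"
      unfolding eq using nb fin by simp
    also have "\<dots> = b"
    proof -
      have "gap S b + ?p + 1 = b" unfolding gap_def using pl by simp
      then show ?thesis using IH by linarith
    qed
    finally show ?thesis .
  qed
qed


definition INV2 :: "nat set \<Rightarrow> bool" where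
  "INV2 S \<longleftrightarrow> (\<forall>t\<in>S. \<forall>x\<in>S. t < x \<longrightarrow> gsucc S t < x \<longrightarrow> gap S x \<le> gscore S t + 1)"

lemma escore_gb:
  assumes fin: "finite R" and rng: "\<forall>x\<in>R. 1 \<le> x \<and> x \<le> j" and tR: "t \<in> R" and yR: "y \<in> R" and ty: "t < y"
  shows "escore j R t = gscore R t"
proof -
  define p where "p = gpred R t"
  define s where "s = gsucc R t"
  have t0: "0 < t" using rng tR by auto
  have pt: "p < t" unfolding p_def using gpred_lt[OF fin t0] .
  have sR: "s \<in> R" and ts: "t < s" and sy: "s \<le> y" unfolding s_def using gsucc_props[OF fin yR ty] by auto
  have sj: "s \<le> j" using rng sR by auto
  have tj: "t \<le> j" using rng tR by auto
  have A: "i \<in> evicted j R" if "p < i" "i < t" for i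
  proof -
    have "i \<notin> R" using no_between[OF fin, of t i] that unfolding p_def by auto
    then show ?thesis unfolding evicted_def using that tj by auto
  qed
  have B: "i \<in> evicted j R" if "t < i" "i < s" for i
  proof -
    have "i \<notin> R" using no_between_succ[OF fin yR ty, of i] that unfolding s_def by auto
    then show ?thesis unfolding evicted_def using that sj by auto
  qed
  have seteq: "{i \<in> evicted j R. (i < t \<and> {i..<t} \<subseteq> evicted j R) \<or> (t < i \<and> {t<..i} \<subseteq> evicted j R)}
      = {p<..<t} \<union> {t<..<s}"
  proof (rule set_eqI, rule iffI)
    fix i assume i: "i \<in> {i \<in> evicted j R. (i < t \<and> {i..<t} \<subseteq> evicted j R) \<or> (t < i \<and> {t<..i} \<subseteq> evicted j R)}"
    then have ie: "i \<in> evicted j R" by simp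
    have i1: "1 \<le> i" using ie unfolding evicted_def by simp
    from i consider (L) "i < t" "{i..<t} \<subseteq> evicted j R" | (R) "t < i" "{t<..i} \<subseteq> evicted j R" by auto
    then show "i \<in> {p<..<t} \<union> {t<..<s}"
    proof cases
      case L
      have "p < i"
      proof (rule ccontr)
        assume "\<not> p < i"
        then have ip: "i \<le> p" by simp
        have "p = 0 \<or> p \<in> R \<and> p < t" unfolding p_def using gpred_cases[OF fin] by blast
        then show False
        proof
          assume "p = 0" then show False using ip i1 by simp
        next
          assume "p \<in> R \<and> p < t"
          then have "p \<in> {i..<t}" using ip by simp
          then have "p \<in> evicted j R" using L by blast
          then show False using \<open>p \<in> R \<and> p < t\<close> unfolding evicted_def by simp
        qed
      qed
      then show ?thesis using L by simp
    next
      case R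
      have "i < s"
      proof (rule ccontr)
        assume "\<not> i < s"
        then have "s \<in> {t<..i}" using ts by simp
        then have "s \<in> evicted j R" using R by blast
        then show False using sR unfolding evicted_def by simp
      qed
      then show ?thesis using R by simp
    qed
  next
    fix i assume i: "i \<in> {p<..<t} \<union> {t<..<s}"
    then consider (L) "p < i" "i < t" | (R) "t < i" "i < s" by auto
    then show "i \<in> {i \<in> evicted j R. (i < t \<and> {i..<t} \<subseteq> evicted j R) \<or> (t < i \<and> {t<..i} \<subseteq> evicted j R)}"
    proof cases
      case L
      have "{i..<t} \<subseteq> evicted j R" using A L by auto
      then show ?thesis using A[OF L] L by simp
    next
      case R
      have "{t<..i} \<subseteq> evicted j R" using B R by auto
      then show ?thesis using B[OF R] R by simp
    qed
  qed
  have disj: "{p<..<t} \<inter> {t<..<s} = {}" by auto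
  have "escore j R t = card ({p<..<t} \<union> {t<..<s})" unfolding escore_def seteq ..
  also have "\<dots> = card {p<..<t} + card {t<..<s}" using disj by (simp add: card_Un_disjoint)
  also have "\<dots> = (t - p - 1) + (s - t - 1)" by simp
  also have "\<dots> = gscore R t"
  proof -
    have "gpred R s = t" unfolding s_def using gpred_gsucc[OF fin tR yR ty] .
    then show ?thesis unfolding gscore_def gap_def p_def s_def by simp
  qed
  finally show ?thesis .
qed

lemma gap_remove_mono:
  assumes "finite S" "0 \<notin> S" "a \<in> S" "x \<in> S - {a}"
  shows "gap S x \<le> gap (S - {a}) x"
  using gap_remove[OF assms(1,2,3), of x] assms(4) by auto

lemma gscore_remove_mono:
  assumes fin: "finite S" and z: "0 \<notin> S" and aS: "a \<in> S" and tS: "t \<in> S - {a}" and xS: "x \<in> S - {a}" and tx: "t < x"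
  shows "gscore S t \<le> gscore (S - {a}) t"
proof -
  have g1: "gap S t \<le> gap (S - {a}) t" using gap_remove_mono[OF fin z aS tS] .
  have gs: "gsucc (S - {a}) t = (if gsucc S t = a then gsucc S a else gsucc S t)"
    using gsucc_remove[OF fin aS tS xS tx] .
  have sx: "gsucc S t \<in> S" "t < gsucc S t" "gsucc S t \<le> x" using gsucc_props[OF fin _ tx] xS by auto
  show ?thesis
  proof (cases "gsucc S t = a")
    case True
    have ax: "a < x" using sx True xS by auto
    have sa: "gsucc S a \<in> S" "a < gsucc S a" using gsucc_props[OF fin _ ax] xS by auto
    have pa: "gpred S (gsucc S a) = a" using gpred_gsucc[OF fin aS _ ax] xS by auto
    have "gap (S - {a}) (gsucc S a) = gap S a + 1 + gap S (gsucc S a)"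
      using gap_remove[OF fin z aS, of "gsucc S a"] sa pa by auto
    then have "gap S (gsucc S t) \<le> gap (S - {a}) (gsucc (S - {a}) t)" using gs True by simp
    then show ?thesis unfolding gscore_def using g1 by simp
  next
    case False
    have "gap S (gsucc S t) \<le> gap (S - {a}) (gsucc S t)" using gap_remove_mono[OF fin z aS] sx False by auto
    then show ?thesis unfolding gscore_def using g1 gs False by simp
  qed
qed

lemma INV2_evict:
  assumes fin: "finite S" and z: "0 \<notin> S" and inv: "INV2 S" and aS: "a \<in> S"
    and mn: "\<And>t y. t \<in> S \<Longrightarrow> y \<in> S \<Longrightarrow> t < y \<Longrightarrow> gscore S a \<le> gscore S t"
    and ay: "y0 \<in> S" "a < y0"
  shows "INV2 (S - {a})"
  unfolding INV2_def
proof (intro ballI impI)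
  fix t x assume tS: "t \<in> S - {a}" and xS: "x \<in> S - {a}" and tx: "t < x" and sx: "gsucc (S - {a}) t < x"
  have mono: "gscore S t \<le> gscore (S - {a}) t" using gscore_remove_mono[OF fin z aS tS xS tx] .
  have mn': "gscore S a \<le> gscore S t" using mn[of t x] tS xS tx by auto
  have fS': "finite (S - {a})" using fin by simp
  show "gap (S - {a}) x \<le> gscore (S - {a}) t + 1"
  proof (cases "gpred S x = a")
    case True
    have x0: "0 < x" using xS z by (cases x) auto
    have xa: "x = gsucc S a" using gsucc_gpred[OF fin _ _ x0] True xS aS by auto
    have "gap (S - {a}) x = gap S a + 1 + gap S x" using gap_remove[OF fin z aS, of x] xS True by auto
    also have "\<dots> = gscore S a + 1" unfolding gscore_def using xa by simp
    finally show ?thesis using mono mn' by simp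
  next
    case False
    have e: "gap (S - {a}) x = gap S x" using gap_remove[OF fin z aS, of x] xS False by auto
    have s': "gsucc (S - {a}) t \<in> S - {a}" "t < gsucc (S - {a}) t" using gsucc_props[OF fS' xS tx] by auto
    have "gsucc S t \<le> gsucc (S - {a}) t" using gsucc_le[OF fin, of "gsucc (S - {a}) t" t] s' by auto
    then have "gsucc S t < x" using sx by simp
    then have "gap S x \<le> gscore S t + 1" using inv tS xS tx unfolding INV2_def by auto
    then show ?thesis using e mono by simp
  qed
qed

lemma INV2_append:
  assumes fin: "finite S" and inv: "INV2 S" and above: "\<forall>y\<in>S. y < a" and g0: "gap (insert a S) a = 0"
  shows "INV2 (insert a S)"
  unfolding INV2_def
proof (intro ballI impI)
  fix t x assume tS: "t \<in> insert a S" and xS: "x \<in> insert a S" and tx: "t < x" and sx: "gsucc (insert a S) t < x"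
  have ta: "t \<noteq> a" using tS xS tx above by auto
  then have tS': "t \<in> S" using tS by simp
  show "gap (insert a S) x \<le> gscore (insert a S) t + 1"
  proof (cases "x = a")
    case True then show ?thesis using g0 by simp
  next
    case False
    then have xS': "x \<in> S" using xS by simp
    have gs: "gsucc (insert a S) t = gsucc S t" using gsucc_insert_above[OF fin above tS' xS' tx] .
    have sS: "gsucc S t \<in> S" using gsucc_props[OF fin xS' tx] by simp
    have e1: "gap (insert a S) x = gap S x" using gap_insert_above above xS' by auto
    have e2: "gscore (insert a S) t = gscore S t" unfolding gscore_def gs
      using gap_insert_above above tS' sS by auto
    have "gap S x \<le> gscore S t + 1" using inv tS' xS' tx sx gs unfolding INV2_def by auto
    then show ?thesis using e1 e2 by simp
  qed
qed

lemma remove_max_facts: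
  assumes fin: "finite S" and z: "0 \<notin> S" and aS: "a \<in> S" and mx: "\<forall>y\<in>S. y \<le> a"
  shows "\<And>x. x \<in> S - {a} \<Longrightarrow> gap (S - {a}) x = gap S x"
    and "\<And>t x. t \<in> S - {a} \<Longrightarrow> x \<in> S - {a} \<Longrightarrow> t < x \<Longrightarrow> gsucc (S - {a}) t = gsucc S t"
proof -
  fix x assume xS: "x \<in> S - {a}"
  have x0: "0 < x" using xS z by (cases x) auto
  have "gpred S x < x" using gpred_lt[OF fin x0] .
  then have "gpred S x \<noteq> a" using mx xS by auto
  then show "gap (S - {a}) x = gap S x" using gap_remove[OF fin z aS, of x] xS by auto
next
  fix t x assume tS: "t \<in> S - {a}" and xS: "x \<in> S - {a}" and tx: "t < x"
  have "gsucc S t \<le> x" using gsucc_le[OF fin _ tx] xS by auto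
  then have "gsucc S t \<noteq> a" using mx xS by auto
  then show "gsucc (S - {a}) t = gsucc S t" using gsucc_remove[OF fin aS tS xS tx] by simp
qed

lemma INV2_remove_max:
  assumes fin: "finite S" and z: "0 \<notin> S" and aS: "a \<in> S" and mx: "\<forall>y\<in>S. y \<le> a" and inv: "INV2 S"
  shows "INV2 (S - {a})"
  unfolding INV2_def
proof (intro ballI impI)
  fix t x assume tS: "t \<in> S - {a}" and xS: "x \<in> S - {a}" and tx: "t < x" and sx: "gsucc (S - {a}) t < x"
  note F = remove_max_facts[OF fin z aS mx]
  have gs: "gsucc (S - {a}) t = gsucc S t" using F(2)[OF tS xS tx] .
  have sS: "gsucc S t \<in> S - {a}"
  proof -
    have "gsucc S t \<in> S" "gsucc S t \<le> x" using gsucc_props[OF fin _ tx] xS by auto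
    then show ?thesis using mx xS by auto
  qed
  have e2: "gscore (S - {a}) t = gscore S t" unfolding gscore_def gs using F(1) tS sS by simp
  have "gap S x \<le> gscore S t + 1" using inv tS xS tx sx gs unfolding INV2_def by auto
  then show "gap (S - {a}) x \<le> gscore (S - {a}) t + 1" using F(1)[OF xS] e2 by simp
qed


locale stp =
  fixes k j :: nat and R0 :: "nat set"
  assumes k2: "2 \<le> k" and fin0: "finite R0" and rng0: "\<forall>x\<in>R0. 1 \<le> x \<and> x \<le> j"
    and card0: "card R0 + 1 \<le> k" and inv0: "INV2 (insert (Suc j) R0)"
begin

definition "r = Max (insert 0 R0)"
definition "n = card R0"
definition "u = j - r"
definition "m = k + 1 - n"

definition sinv :: "nat set \<Rightarrow> nat \<Rightarrow> bool" where
  "sinv R tp \<longleftrightarrow> finite R \<and> (\<forall>x\<in>R. 1 \<le> x \<and> x \<le> tp) \<and> (tp \<in> R \<or> (tp = 0 \<and> R = {}))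
     \<and> r \<le> tp \<and> tp \<le> j \<and> {x\<in>R. x < r} = {x\<in>R0. x < r} \<and> INV2 R
     \<and> (\<forall>t\<in>R. t < r \<longrightarrow> u \<le> gscore R t + 1)
     \<and> (\<forall>x\<in>R. r < x \<longrightarrow> gap R x + 1 \<le> u \<and> (m - 2) * gap R x \<le> 2 * u + (m - 2))"

lemma r_ge: "x \<in> R0 \<Longrightarrow> x \<le> r"
  unfolding r_def using fin0 by (intro Max_ge) auto

lemma r_cases: "r \<in> R0 \<or> (r = 0 \<and> R0 = {})"
proof (cases "R0 = {}")
  case True
  then show ?thesis unfolding r_def by simp
next
  case False
  then obtain x where xR: "x \<in> R0" by auto
  have rin: "r \<in> insert 0 R0" unfolding r_def using fin0 by (intro Max_in) auto
  have "1 \<le> x" "x \<le> r" using rng0 r_ge xR by auto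
  then have "r \<noteq> 0" by simp
  then show ?thesis using rin by simp
qed

lemma r_le_j: "r \<le> j"
  using r_cases rng0 by auto

lemma zero_notin0: "0 \<notin> R0" using rng0 by auto

lemma n_le: "n + 1 \<le> k" unfolding n_def using card0 .

lemma m_ge2: "2 \<le> m" unfolding m_def using n_le by simp

lemma gpred_top: "gpred (insert (Suc j) R0) (Suc j) = r"
proof (rule gpred_eqI)
  show "finite (insert (Suc j) R0)" using fin0 by simp
  show "r = 0 \<or> r \<in> insert (Suc j) R0" using r_cases by auto
  show "r < Suc j" using r_le_j by simp
  fix y assume "y \<in> insert (Suc j) R0" "y < Suc j"
  then show "y \<le> r" using r_ge by auto
qed

lemma sinv_start: "sinv R0 r"
proof -
  let ?S = "insert (Suc j) R0"
  have finS: "finite ?S" using fin0 by simp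
  have zS: "0 \<notin> ?S" using zero_notin0 by simp
  have nj: "Suc j \<notin> R0" using rng0 by auto
  have mxS: "\<forall>y\<in>?S. y \<le> Suc j" using rng0 by auto
  have SR: "?S - {Suc j} = R0" using nj by auto
  have i2: "INV2 R0" using INV2_remove_max[OF finS zS _ mxS inv0] SR by simp
  note F = remove_max_facts[OF finS zS insertI1 mxS, simplified SR]
  have i5: "u \<le> gscore R0 t + 1" if tR: "t \<in> R0" and tr: "t < r" for t
  proof -
    have rR: "r \<in> R0" using r_cases tr by auto
    have sle: "gsucc ?S t \<le> r" using gsucc_le[OF finS, of r t] rR tr by simp
    have "gap ?S (Suc j) \<le> gscore ?S t + 1"
    proof -
      have "t \<in> ?S" "Suc j \<in> ?S" "t < Suc j" "gsucc ?S t < Suc j" using tR sle r_le_j tr by auto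
      then show ?thesis using inv0 unfolding INV2_def by blast
    qed
    moreover have "gap ?S (Suc j) = u" unfolding gap_def gpred_top u_def by simp
    moreover have "gscore ?S t = gscore R0 t"
    proof -
      have g: "gsucc R0 t = gsucc ?S t" using F(2)[OF tR rR tr] by simp
      have sR: "gsucc ?S t \<in> R0"
      proof -
        have "gsucc ?S t \<in> ?S" using gsucc_props[OF finS, of r t] rR tr by simp
        then show ?thesis using sle r_le_j by auto
      qed
      show ?thesis unfolding gscore_def g using F(1)[OF tR] F(1)[OF sR] by simp
    qed
    ultimately show ?thesis by simp
  qed
  have a1: "\<forall>x\<in>R0. 1 \<le> x \<and> x \<le> r" using rng0 r_ge by blast
  have a2: "r \<in> R0 \<or> (r = 0 \<and> R0 = {})" using r_cases .
  have a6: "\<forall>x\<in>R0. r < x \<longrightarrow> gap R0 x + 1 \<le> u \<and> (m - 2) * gap R0 x \<le> 2 * u + (m - 2)"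
    using r_ge by (meson not_le)
  show ?thesis unfolding sinv_def
    using fin0 a1 a2 r_le_j i2 i5 a6 by blast
qed

lemma sinvD:
  assumes "sinv R tp"
  shows "finite R" "\<forall>x\<in>R. 1 \<le> x \<and> x \<le> tp" "tp \<in> R \<or> (tp = 0 \<and> R = {})"
    "r \<le> tp" "{x\<in>R. x < r} = {x\<in>R0. x < r}" "INV2 R"
    "\<forall>t\<in>R. t < r \<longrightarrow> u \<le> gscore R t + 1"
    "\<forall>x\<in>R. r < x \<longrightarrow> gap R x + 1 \<le> u \<and> (m - 2) * gap R x \<le> 2 * u + (m - 2)"
    "tp \<le> j"
  using assms unfolding sinv_def by blast+

lemma sinvI:
  assumes "finite R" "\<forall>x\<in>R. 1 \<le> x \<and> x \<le> tp" "tp \<in> R \<or> (tp = 0 \<and> R = {})"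
    "r \<le> tp" "tp \<le> j" "{x\<in>R. x < r} = {x\<in>R0. x < r}" "INV2 R"
    "\<forall>t\<in>R. t < r \<longrightarrow> u \<le> gscore R t + 1"
    "\<forall>x\<in>R. r < x \<longrightarrow> gap R x + 1 \<le> u \<and> (m - 2) * gap R x \<le> 2 * u + (m - 2)"
  shows "sinv R tp"
  unfolding sinv_def by (intro conjI; fact assms)

lemma sinv_append:
  assumes si: "sinv R tp" and tj: "tp < j"
  shows "sinv (insert (Suc tp) R) (Suc tp)"
proof -
  note D = sinvD[OF si]
  have fin: "finite R" and rng: "\<forall>x\<in>R. 1 \<le> x \<and> x \<le> tp" and tc: "tp \<in> R \<or> (tp = 0 \<and> R = {})"
    and rt: "r \<le> tp" and bel: "{x\<in>R. x < r} = {x\<in>R0. x < r}" and i2: "INV2 R"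
    and i5: "\<forall>t\<in>R. t < r \<longrightarrow> u \<le> gscore R t + 1"
    and i6: "\<forall>x\<in>R. r < x \<longrightarrow> gap R x + 1 \<le> u \<and> (m - 2) * gap R x \<le> 2 * u + (m - 2)"
    using D by simp_all
  let ?R = "insert (Suc tp) R"
  have above: "\<forall>y\<in>R. y < Suc tp" using rng by auto
  have gp: "gpred ?R (Suc tp) = tp"
  proof (rule gpred_eqI)
    show "finite ?R" using fin by simp
    show "tp = 0 \<or> tp \<in> ?R" using tc by auto
    show "tp < Suc tp" by simp
    fix y assume "y \<in> ?R" "y < Suc tp" then show "y \<le> tp" by auto
  qed
  have g0: "gap ?R (Suc tp) = 0" unfolding gap_def gp by simp
  have i2': "INV2 ?R" using INV2_append[OF fin i2 above g0] .
  have bel': "{x\<in>?R. x < r} = {x\<in>R0. x < r}"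
  proof -
    have "{x\<in>?R. x < r} = {x\<in>R. x < r}" using rt by auto
    then show ?thesis using bel by simp
  qed
  have i5': "u \<le> gscore ?R t + 1" if "t \<in> ?R" "t < r" for t
  proof -
    have tR: "t \<in> R" using that rt by auto
    have topR: "tp \<in> R" using tc tR by auto
    have ttop: "t < tp" using that rt by simp
    have gs: "gsucc ?R t = gsucc R t" using gsucc_insert_above[OF fin above tR topR ttop] .
    have sR: "gsucc R t \<in> R" using gsucc_props[OF fin topR ttop] by simp
    have "gscore ?R t = gscore R t" unfolding gscore_def gs
      using gap_insert_above[OF above] tR sR above by simp
    then show ?thesis using i5 tR that by simp
  qed
  have i6': "gap ?R x + 1 \<le> u \<and> (m - 2) * gap ?R x \<le> 2 * u + (m - 2)" if "x \<in> ?R" "r < x" for x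
  proof (cases "x = Suc tp")
    case True
    have "1 \<le> u" unfolding u_def using rt tj by simp
    then show ?thesis using True g0 by simp
  next
    case False
    then have xR: "x \<in> R" using that by simp
    have "gap ?R x = gap R x" using gap_insert_above[OF above] xR above by simp
    then show ?thesis using i6 xR that by simp
  qed
  have a1: "\<forall>x\<in>?R. 1 \<le> x \<and> x \<le> Suc tp" using rng by auto
  have a0: "finite ?R" using fin by simp
  have a3: "r \<le> Suc tp" "Suc tp \<le> j" using rt tj by auto
  show ?thesis by (rule sinvI[OF a0 a1 _ a3 bel' i2']) (use i5' i6' in auto)
qed


lemma sinv_evict:
  assumes si: "sinv R tp" and cR: "card R = Suc k" and aR: "a \<in> R" and atp: "a \<noteq> tp"
    and mn: "\<forall>v\<in>R. v \<noteq> tp \<longrightarrow> escore j R a \<le> escore j R v"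
  shows "sinv (R - {a}) tp"
proof -
  note D = sinvD[OF si]
  have fin: "finite R" and rng: "\<forall>x\<in>R. 1 \<le> x \<and> x \<le> tp" and tc: "tp \<in> R \<or> (tp = 0 \<and> R = {})"
    and rt: "r \<le> tp" and bel: "{x\<in>R. x < r} = {x\<in>R0. x < r}" and i2: "INV2 R"
    and i5: "\<forall>t\<in>R. t < r \<longrightarrow> u \<le> gscore R t + 1"
    and i6: "\<forall>x\<in>R. r < x \<longrightarrow> gap R x + 1 \<le> u \<and> (m - 2) * gap R x \<le> 2 * u + (m - 2)"
    and tj: "tp \<le> j"
    using D by simp_all
  have Rne: "R \<noteq> {}" using cR by auto
  have tpR: "tp \<in> R" using tc Rne by auto
  have lt: "v < tp" if "v \<in> R" "v \<noteq> tp" for v using rng that by force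
  have rngj: "\<forall>x\<in>R. 1 \<le> x \<and> x \<le> j" using rng tj by auto
  have z: "0 \<notin> R" using rng by auto
  have mn': "gscore R a \<le> gscore R v" if "v \<in> R" "v \<noteq> tp" for v
  proof -
    have "escore j R a = gscore R a" using escore_gb[OF fin rngj aR tpR lt[OF aR atp]] .
    moreover have "escore j R v = gscore R v" using escore_gb[OF fin rngj that(1) tpR lt[OF that]] .
    ultimately show ?thesis using mn that by auto
  qed
  define F where "F = {x\<in>R. r < x}"
  define Lp where "Lp = {x\<in>R. x \<le> r}"
  have finF: "finite F" "finite Lp" unfolding F_def Lp_def using fin by auto
  have RLF: "R = Lp \<union> F" "Lp \<inter> F = {}" unfolding F_def Lp_def by auto
  have cardR: "card R = card Lp + card F" using RLF finF card_Un_disjoint by metis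
  have LpR0: "Lp \<subseteq> R0"
  proof
    fix x assume "x \<in> Lp"
    then have xR: "x \<in> R" and xr: "x \<le> r" unfolding Lp_def by auto
    show "x \<in> R0"
    proof (cases "x < r")
      case True
      then have "x \<in> {x\<in>R. x < r}" using xR by simp
      then show ?thesis using bel by auto
    next
      case False
      then have "x = r" using xr by simp
      then have "1 \<le> r" using xR rng by auto
      then have "\<not> (r = 0 \<and> R0 = {})" by simp
      then have "r \<in> R0" using r_cases by blast
      then show ?thesis using \<open>x = r\<close> by simp
    qed
  qed
  have cLp: "card Lp \<le> n" unfolding n_def using card_mono[OF fin0 LpR0] .
  have cF: "m \<le> card F" using cardR cR cLp unfolding m_def by simp
  have cF2: "2 \<le> card F" using cF m_ge2 by simp
  have cF3: "3 \<le> card F" if "r \<notin> R"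
  proof (cases "R0 = {}")
    case True
    then have "Lp = {}" using LpR0 by blast
    then show ?thesis using cardR cR k2 by simp
  next
    case False
    then have rR0: "r \<in> R0" using r_cases by blast
    have "Lp \<subseteq> R0 - {r}" using LpR0 that unfolding Lp_def by blast
    then have "card Lp \<le> card (R0 - {r})" by (rule card_mono[rotated]) (use fin0 in simp)
    also have "\<dots> = n - 1" unfolding n_def using rR0 fin0 by simp
    finally have "card Lp \<le> n - 1" .
    moreover have "1 \<le> n"
    proof -
      have "R0 \<noteq> {}" using rR0 by blast
      then have "0 < card R0" using fin0 by (simp add: card_gt_0_iff)
      then show ?thesis unfolding n_def by simp
    qed
    ultimately show ?thesis using cardR cR n_le by linarith
  qed
  have tpF: "tp \<in> F"
  proof -
    have "r < tp"
    proof (rule ccontr)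
      assume "\<not> r < tp"
      then have "tp = r" using rt by simp
      then have "F = {}" unfolding F_def using rng by auto
      then show False using cF2 by simp
    qed
    then show ?thesis unfolding F_def using tpR by simp
  qed
  define f1 where "f1 = Min F"
  have f1F: "f1 \<in> F" unfolding f1_def using finF(1) tpF Min_in by blast
  have f1min: "f1 \<le> x" if "x \<in> F" for x unfolding f1_def using finF(1) that by simp
  have f1R: "f1 \<in> R" and rf1: "r < f1" using f1F unfolding F_def by auto
  have f1tp: "f1 < tp"
  proof (rule ccontr)
    assume "\<not> f1 < tp"
    then have "f1 = tp" using f1F rng unfolding F_def by force
    then have "F \<subseteq> {tp}" using f1min rng unfolding F_def by force
    then have "card F \<le> 1" using card_mono[of "{tp}" F] by simp
    then show False using cF2 by simp
  qed
  have wit: "\<exists>w\<in>R. w \<noteq> tp \<and> gscore R w + 2 \<le> u"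
  proof (cases "r \<in> R")
    case True
    have gp: "gpred R f1 = r"
    proof (rule gpred_eqI[OF fin])
      show "r = 0 \<or> r \<in> R" using True by simp
      show "r < f1" by fact
      fix y assume "y \<in> R" "y < f1"
      then show "y \<le> r" using f1min unfolding F_def by force
    qed
    define s1 where "s1 = gsucc R f1"
    have s1: "s1 \<in> R" "f1 < s1" "s1 \<le> tp" unfolding s1_def using gsucc_props[OF fin tpR f1tp] by auto
    have gs1: "gpred R s1 = f1" unfolding s1_def using gpred_gsucc[OF fin f1R tpR f1tp] .
    have "gscore R f1 = (f1 - r - 1) + (s1 - f1 - 1)" unfolding gscore_def gap_def gp s1_def[symmetric] gs1 ..
    then have "gscore R f1 + 2 \<le> u" unfolding u_def using s1 rf1 tj by simp
    then show ?thesis using f1R f1tp by auto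
  next
    case False
    have c3: "3 \<le> card F" using cF3[OF False] .
    define f2 where "f2 = gsucc R f1"
    have f2: "f2 \<in> R" "f1 < f2" "f2 \<le> tp" unfolding f2_def using gsucc_props[OF fin tpR f1tp] by auto
    have f2tp: "f2 < tp"
    proof (rule ccontr)
      assume "\<not> f2 < tp"
      then have e: "f2 = tp" using f2 by simp
      have "F \<subseteq> {f1, tp}"
      proof
        fix x assume xF: "x \<in> F"
        show "x \<in> {f1, tp}"
        proof (cases "x = f1")
          case True then show ?thesis by simp
        next
          case False
          then have "f1 < x" using f1min xF by force
          then have "f2 \<le> x" unfolding f2_def using gsucc_le[OF fin] xF unfolding F_def by auto
          then have "x = tp" using e xF rng unfolding F_def by force
          then show ?thesis by simp
        qed
      qed
      then have "card F \<le> card {f1, tp}" by (rule card_mono[rotated]) simp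
      also have "\<dots> \<le> 2" by (simp add: card_insert_if)
      finally show False using c3 by simp
    qed
    have gp2: "gpred R f2 = f1" unfolding f2_def using gpred_gsucc[OF fin f1R tpR f1tp] .
    define s2 where "s2 = gsucc R f2"
    have s2: "s2 \<in> R" "f2 < s2" "s2 \<le> tp" unfolding s2_def using gsucc_props[OF fin tpR f2tp] by auto
    have gs2: "gpred R s2 = f2" unfolding s2_def using gpred_gsucc[OF fin f2(1) tpR f2tp] .
    have "gscore R f2 = (f2 - f1 - 1) + (s2 - f2 - 1)" unfolding gscore_def gap_def gp2 s2_def[symmetric] gs2 ..
    then have "gscore R f2 + 2 \<le> u" unfolding u_def using s2 f2 rf1 tj by simp
    then show ?thesis using f2 f2tp by auto
  qed
  have sa: "gscore R a + 2 \<le> u" using wit mn' by fastforce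
  have ar: "r \<le> a"
  proof (rule ccontr)
    assume "\<not> r \<le> a"
    then have "u \<le> gscore R a + 1" using i5 aR by simp
    then show False using sa by simp
  qed
  have avg: "(m - 2) * gscore R a \<le> 2 * u"
  proof -
    define C where "C = F - {f1, tp}"
    define F1 where "F1 = {x\<in>R. f1 < x}"
    have finC: "finite C" "finite F1" unfolding C_def F1_def using finF fin by auto
    have cC: "m - 2 \<le> card C"
    proof -
      have "card C = card F - card {f1, tp}" unfolding C_def using f1F tpF finF by (simp add: card_Diff_subset)
      also have "card {f1, tp} = 2" using f1tp by simp
      finally show ?thesis using cF by simp
    qed
    have CR: "t \<in> R" "t < tp" "f1 < t" if "t \<in> C" for t
      using that f1min lt unfolding C_def F_def by force+
    have CF1: "C \<subseteq> F1" unfolding F1_def using CR by auto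
    have sC: "gsucc R ` C \<subseteq> F1"
    proof
      fix y assume "y \<in> gsucc R ` C"
      then obtain t where tC: "t \<in> C" and y: "y = gsucc R t" by auto
      have "gsucc R t \<in> R" "t < gsucc R t" using gsucc_props[OF fin tpR CR(2)[OF tC]] by auto
      then show "y \<in> F1" unfolding F1_def using y CR(3)[OF tC] by simp
    qed
    have injC: "inj_on (gsucc R) C"
    proof (rule inj_onI)
      fix x y assume xC: "x \<in> C" and yC: "y \<in> C" and e: "gsucc R x = gsucc R y"
      show "x = y"
      proof (rule ccontr)
        assume "x \<noteq> y"
        then consider "x < y" | "y < x" by linarith
        then show False
        proof cases
          case 1
          have "gsucc R x \<le> y" using gsucc_le[OF fin _ 1] CR(1)[OF yC] by simp
          moreover have "y < gsucc R y" using gsucc_props[OF fin tpR CR(2)[OF yC]] by simp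
          ultimately show False using e by simp
        next
          case 2
          have "gsucc R y \<le> x" using gsucc_le[OF fin _ 2] CR(1)[OF xC] by simp
          moreover have "x < gsucc R x" using gsucc_props[OF fin tpR CR(2)[OF xC]] by simp
          ultimately show False using e by simp
        qed
      qed
    qed
    have sumF1: "(\<Sum>x\<in>F1. gap R x) \<le> u"
    proof -
      have p1: "(\<Sum>x\<in>{y\<in>R. y \<le> tp}. gap R x) + card {y\<in>R. y \<le> tp} = tp"
        using prefix_sum[OF fin z] tpR by blast
      have p2: "(\<Sum>x\<in>{y\<in>R. y \<le> f1}. gap R x) + card {y\<in>R. y \<le> f1} = f1"
        using prefix_sum[OF fin z] f1R by blast
      have e1: "{y\<in>R. y \<le> tp} = {y\<in>R. y \<le> f1} \<union> F1" unfolding F1_def using rng f1tp by force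
      have e2: "{y\<in>R. y \<le> f1} \<inter> F1 = {}" unfolding F1_def by auto
      have fa: "finite {y\<in>R. y \<le> f1}" using fin by simp
      have "(\<Sum>x\<in>{y\<in>R. y \<le> tp}. gap R x) = (\<Sum>x\<in>{y\<in>R. y \<le> f1}. gap R x) + (\<Sum>x\<in>F1. gap R x)"
        unfolding e1 using sum.union_disjoint[OF fa finC(2) e2] .
      moreover have "card {y\<in>R. y \<le> tp} = card {y\<in>R. y \<le> f1} + card F1"
        unfolding e1 using card_Un_disjoint[OF fa finC(2) e2] .
      ultimately have "(\<Sum>x\<in>F1. gap R x) + card F1 + f1 = tp" using p1 p2 by linarith
      then show ?thesis unfolding u_def using rf1 tj by linarith
    qed
    have "(m - 2) * gscore R a \<le> card C * gscore R a" using cC by simp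
    also have "\<dots> = (\<Sum>t\<in>C. gscore R a)" by simp
    also have "\<dots> \<le> (\<Sum>t\<in>C. gscore R t)" using mn' CR by (intro sum_mono) auto
    also have "\<dots> = (\<Sum>t\<in>C. gap R t) + (\<Sum>t\<in>C. gap R (gsucc R t))" unfolding gscore_def by (simp add: sum.distrib)
    also have "(\<Sum>t\<in>C. gap R t) \<le> (\<Sum>x\<in>F1. gap R x)" by (rule sum_mono2[OF finC(2) CF1]) simp
    also have "(\<Sum>t\<in>C. gap R (gsucc R t)) = (\<Sum>x\<in>gsucc R ` C. gap R x)"
      using sum.reindex[OF injC, of "gap R"] by simp
    also have "\<dots> \<le> (\<Sum>x\<in>F1. gap R x)" by (rule sum_mono2[OF finC(2) sC]) simp
    finally show ?thesis using sumF1 by linarith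
  qed
  have mn'': "gscore R a \<le> gscore R t" if "t \<in> R" "y \<in> R" "t < y" for t y
    using mn' that rng by force
  have atp': "a < tp" using lt[OF aR atp] .
  have i2': "INV2 (R - {a})" using INV2_evict[OF fin z i2 aR mn'' tpR atp'] .
  have bel': "{x\<in>R - {a}. x < r} = {x\<in>R0. x < r}"
  proof -
    have "{x\<in>R - {a}. x < r} = {x\<in>R. x < r}" using ar by auto
    then show ?thesis using bel by simp
  qed
  have i5': "\<forall>t\<in>R - {a}. t < r \<longrightarrow> u \<le> gscore (R - {a}) t + 1"
  proof (intro ballI impI)
    fix t assume tR: "t \<in> R - {a}" and tr: "t < r"
    have "tp \<in> R - {a}" using tpR atp by simp
    then have "gscore R t \<le> gscore (R - {a}) t" using gscore_remove_mono[OF fin z aR tR] tr rt by simp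
    then show "u \<le> gscore (R - {a}) t + 1" using i5 tR tr by fastforce
  qed
  have i6': "\<forall>x\<in>R - {a}. r < x \<longrightarrow> gap (R - {a}) x + 1 \<le> u \<and> (m - 2) * gap (R - {a}) x \<le> 2 * u + (m - 2)"
  proof (intro ballI impI)
    fix x assume xR: "x \<in> R - {a}" and rx: "r < x"
    show "gap (R - {a}) x + 1 \<le> u \<and> (m - 2) * gap (R - {a}) x \<le> 2 * u + (m - 2)"
    proof (cases "gpred R x = a")
      case True
      have x0: "0 < x" using xR z by (cases x) auto
      have xa: "x = gsucc R a" using gsucc_gpred[OF fin _ _ x0] True xR aR by auto
      have "gap (R - {a}) x = gap R a + 1 + gap R x" using gap_remove[OF fin z aR, of x] xR True by auto
      also have "\<dots> = gscore R a + 1" unfolding gscore_def using xa by simp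
      finally have e: "gap (R - {a}) x = gscore R a + 1" .
      have "(m - 2) * gap (R - {a}) x = (m - 2) * gscore R a + (m - 2)" unfolding e by simp
      then show ?thesis using e sa avg by simp
    next
      case False
      have "gap (R - {a}) x = gap R x" using gap_remove[OF fin z aR, of x] xR False by auto
      then show ?thesis using i6 xR rx by simp
    qed
  qed
  have a1: "\<forall>x\<in>R - {a}. 1 \<le> x \<and> x \<le> tp" using rng by auto
  have a0: "finite (R - {a})" using fin by simp
  have a3: "tp \<in> R - {a} \<or> (tp = 0 \<and> R - {a} = {})" using tpR atp by simp
  show ?thesis by (rule sinvI[OF a0 a1 a3 rt tj bel' i2' i5' i6'])
qed


lemma sinv_alloc:
  assumes "alloc kk jj lock R R'"
  shows "kk = k \<Longrightarrow> jj = j \<Longrightarrow> lock = tp \<Longrightarrow> sinv R tp \<Longrightarrow> card R \<le> Suc k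
         \<Longrightarrow> sinv R' tp \<and> card R' = min k (card R)"
  using assms
proof (induction rule: alloc.induct)
  case (alloc_done R kk jj lock)
  then show ?case by simp
next
  case (alloc_evict R kk jj lock R1 R2)
  have cR: "card R = Suc k" using alloc_evict.prems alloc_evict.hyps(1) by simp
  obtain t where tR: "t \<in> R" and tl: "t \<noteq> lock"
    and mn: "\<forall>v\<in>R. v \<noteq> lock \<longrightarrow> escore jj R t \<le> escore jj R v" and R1: "R1 = R - {t}"
    using alloc_evict.hyps(2) unfolding evict_step_def by blast
  have s1: "sinv R1 tp" unfolding R1
    using sinv_evict[OF alloc_evict.prems(4) cR tR] tl mn alloc_evict.prems(1,2,3) by simp
  have c1: "card R1 = k" unfolding R1 using cR tR alloc_evict.prems(4) sinvD(1) by simp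
  have "sinv R2 tp \<and> card R2 = min k (card R1)"
    using alloc_evict.IH alloc_evict.prems(1,2,3) s1 c1 by simp
  then show ?case using c1 cR by simp
qed

lemma sinv_mat:
  assumes "mat kk jj i R R' c"
  shows "kk = k \<Longrightarrow> jj = j \<Longrightarrow> R = R0 \<Longrightarrow> r \<le> i \<Longrightarrow> i \<le> j
     \<Longrightarrow> sinv R' i \<and> c = i - r \<and> card R' = min (Suc k) (n + (i - r))"
  using assms
proof (induction rule: mat.induct)
  case (mat_res i R kk jj)
  have ir: "i = r"
  proof -
    have "i \<le> r" using mat_res.hyps mat_res.prems(3) r_ge by auto
    then show ?thesis using mat_res.prems(4) by simp
  qed
  have "card R0 = min (Suc k) n" unfolding n_def using card0 by simp
  then show ?case using sinv_start ir mat_res.prems(3) unfolding n_def by simp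
next
  case (mat_comp i R kk jj R1 c R2)
  have R: "R = R0" using mat_comp.prems by simp
  have ri: "r < i"
  proof -
    have "i \<noteq> r" using r_cases mat_comp.hyps(1,2) R by auto
    then show ?thesis using mat_comp.prems(4) by simp
  qed
  have IH: "sinv R1 (i - 1) \<and> c = i - 1 - r \<and> card R1 = min (Suc k) (n + (i - 1 - r))"
    using mat_comp.IH mat_comp.prems ri by simp
  have A: "sinv R2 (i - 1) \<and> card R2 = min k (card R1)"
    using sinv_alloc[OF mat_comp.hyps(4)] mat_comp.prems(1,2) IH by simp
  have ij: "i - 1 < j" using mat_comp.prems(5) mat_comp.hyps(1) by simp
  have i1: "Suc (i - 1) = i" using mat_comp.hyps(1) by simp
  have S: "sinv (insert i R2) i" using sinv_append[OF conjunct1[OF A] ij] i1 by simp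
  have niR2: "i \<notin> R2" using sinvD(2)[OF conjunct1[OF A]] mat_comp.hyps(1) by force
  have finR2: "finite R2" using sinvD(1)[OF conjunct1[OF A]] .
  have "card (insert i R2) = Suc (card R2)" using niR2 finR2 by simp
  also have "\<dots> = min (Suc k) (n + (i - r))" using A IH ri by simp
  finally show ?case using S IH ri by simp
qed

lemma sinv_grad:
  assumes "grad_step k j R0 R1 c"
  shows "\<exists>S'. R1 = S' - {j} \<and> sinv S' j \<and> card S' = min k (n + u) \<and> c = Suc u"
proof -
  obtain Ra c0 Rb where R1: "R1 = Rb - {j}" and c: "c = Suc c0"
    and ma: "mat k j j R0 Ra c0" and al: "alloc k j j Ra Rb"
    using assms by (cases rule: grad_step.cases) blast
  have M: "sinv Ra j \<and> c0 = j - r \<and> card Ra = min (Suc k) (n + (j - r))"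
    using sinv_mat[OF ma] r_le_j by simp
  have A: "sinv Rb j \<and> card Rb = min k (card Ra)"
    using sinv_alloc[OF al] M by simp
  show ?thesis
  proof (rule exI[of _ Rb], intro conjI)
    show "R1 = Rb - {j}" by (rule R1)
    show "sinv Rb j" using A by simp
    show "card Rb = min k (n + u)" using A M unfolding u_def by simp
    show "c = Suc u" using c M unfolding u_def by simp
  qed
qed

end


definition wt :: "nat \<Rightarrow> real" where "wt \<sigma> = 40 / real (max \<sigma> 40)"
definition trm :: "nat \<Rightarrow> nat set \<Rightarrow> nat \<Rightarrow> real" where
  "trm k S x = wt (k + 2 - idx S x) * (real (gap S x))\<^sup>2"
definition Psi :: "nat \<Rightarrow> nat set \<Rightarrow> real" where "Psi k S = (\<Sum>x\<in>S. trm k S x)"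
definition Phi :: "nat \<Rightarrow> nat set \<Rightarrow> real" where
  "Phi k S = Psi k S + 2 * real (Max S) - real (card S) - 1"

lemma wt_nonneg: "0 \<le> wt s" unfolding wt_def by simp
lemma wt_le1: "wt s \<le> 1" unfolding wt_def by simp
lemma wt_small: "s \<le> 40 \<Longrightarrow> wt s = 1" unfolding wt_def by (simp add: max_def)
lemma wt_big: "40 \<le> s \<Longrightarrow> wt s = 40 / real s" unfolding wt_def by (simp add: max_def)
lemma trm_nonneg: "0 \<le> trm k S x" unfolding trm_def using wt_nonneg by simp
lemma trm_le: "trm k S x \<le> (real (gap S x))\<^sup>2"
  unfolding trm_def using wt_le1[of "k + 2 - idx S x"] wt_nonneg[of "k + 2 - idx S x"]
  by (intro mult_left_le_one_le) auto
lemma Psi_nonneg: "0 \<le> Psi k S" unfolding Psi_def using trm_nonneg by (simp add: sum_nonneg)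

lemma trm_cong:
  assumes "{y\<in>S. y \<le> x} = {y\<in>T. y \<le> x}"
  shows "trm k S x = trm k T x"
proof -
  have "{y\<in>S. y < x} = {y\<in>T. y < x}"
  proof -
    have "{y\<in>S. y < x} = {y\<in>{y\<in>S. y \<le> x}. y < x}" by auto
    also have "\<dots> = {y\<in>{y\<in>T. y \<le> x}. y < x}" using assms by simp
    also have "\<dots> = {y\<in>T. y < x}" by auto
    finally show ?thesis .
  qed
  then have "gap S x = gap T x" unfolding gap_def using gpred_cong by metis
  moreover have "idx S x = idx T x" unfolding idx_def using assms by simp
  ultimately show ?thesis unfolding trm_def by simp
qed

lemma sum_sq_le:
  assumes "finite A"
  shows "(\<Sum>x\<in>A. (real (f x))\<^sup>2) \<le> (\<Sum>x\<in>A. real (f x))\<^sup>2"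
  using assms
proof (induction A rule: finite_induct)
  case empty then show ?case by simp
next
  case (insert a A)
  have s0: "0 \<le> (\<Sum>x\<in>A. real (f x))" by (simp add: sum_nonneg)
  have "(\<Sum>x\<in>insert a A. (real (f x))\<^sup>2) = (real (f a))\<^sup>2 + (\<Sum>x\<in>A. (real (f x))\<^sup>2)"
    using insert by simp
  also have "\<dots> \<le> (real (f a))\<^sup>2 + (\<Sum>x\<in>A. real (f x))\<^sup>2" using insert.IH by simp
  also have "\<dots> \<le> (real (f a) + (\<Sum>x\<in>A. real (f x)))\<^sup>2"
    using s0 by (simp add: power2_sum)
  also have "\<dots> = (\<Sum>x\<in>insert a A. real (f x))\<^sup>2" using insert by simp
  finally show ?case .
qed

lemma alg1:
  fixes g d U rho :: real
  assumes "d + 1 \<le> g" "g \<le> U - 1" "0 \<le> rho" "rho \<le> U + d - 1 - g" "0 \<le> d"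
  shows "g\<^sup>2 + rho\<^sup>2 \<le> (U - 1)\<^sup>2 + d\<^sup>2"
proof -
  have "rho\<^sup>2 \<le> (U + d - 1 - g)\<^sup>2" using assms by (intro power_mono) auto
  moreover have "g\<^sup>2 + (U + d - 1 - g)\<^sup>2 - (U - 1)\<^sup>2 - d\<^sup>2 = 2 * (g - (U - 1)) * (g - d)"
    by (simp add: power2_eq_square algebra_simps)
  moreover have "2 * (g - (U - 1)) * (g - d) \<le> 0"
  proof -
    have "g - (U - 1) \<le> 0" "0 \<le> g - d" using assms by auto
    then show ?thesis by (simp add: mult_nonneg_nonpos2 mult_le_0_iff)
  qed
  ultimately show ?thesis by linarith
qed

context stp
begin

lemma step_ineq:
  assumes si: "sinv S' j" and cS: "card S' = min k (n + u)" and j1: "1 \<le> j"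
  shows "real (Suc u) + Phi k S' \<le> Phi k (insert (Suc j) R0)"
proof -
  let ?S = "insert (Suc j) R0"
  note D = sinvD[OF si]
  have fin: "finite S'" and rng: "\<forall>x\<in>S'. 1 \<le> x \<and> x \<le> j" and jc: "j \<in> S' \<or> (j = 0 \<and> S' = {})"
    and bel: "{x\<in>S'. x < r} = {x\<in>R0. x < r}"
    and i6: "\<forall>x\<in>S'. r < x \<longrightarrow> gap S' x + 1 \<le> u \<and> (m - 2) * gap S' x \<le> 2 * u + (m - 2)"
    using D by simp_all
  have jS: "j \<in> S'" using jc j1 by simp
  have z: "0 \<notin> S'" using rng by auto
  have nj: "Suc j \<notin> R0" using rng0 by auto
  have maxS': "Max S' = j" using fin jS rng by (intro Max_eqI) auto
  have maxS: "Max ?S = Suc j" using fin0 rng0 by (intro Max_eqI) auto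
  have cardS: "card ?S = Suc n" unfolding n_def using fin0 nj by simp
  define L where "L = {x\<in>S'. x \<le> r}"
  define F where "F = {x\<in>S'. r < x}"
  have finLF: "finite L" "finite F" unfolding L_def F_def using fin by auto
  have SLF: "S' = L \<union> F" "L \<inter> F = {}" unfolding L_def F_def by auto
  have LR0: "L \<subseteq> R0"
  proof
    fix x assume "x \<in> L"
    then have xS: "x \<in> S'" and xr: "x \<le> r" unfolding L_def by auto
    show "x \<in> R0"
    proof (cases "x < r")
      case True
      then have "x \<in> {x\<in>S'. x < r}" using xS by simp
      then show ?thesis using bel by auto
    next
      case False
      then have "x = r" using xr by simp
      then have "1 \<le> r" using xS rng by auto
      then have "\<not> (r = 0 \<and> R0 = {})" by simp
      then have "r \<in> R0" using r_cases by blast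
      then show ?thesis using \<open>x = r\<close> by simp
    qed
  qed
  have R0L: "R0 - {r} \<subseteq> L"
  proof
    fix x assume x: "x \<in> R0 - {r}"
    then have "x < r" using r_ge by force
    then have "x \<in> {x\<in>R0. x < r}" using x by simp
    then have "x \<in> S'" using bel by auto
    then show "x \<in> L" unfolding L_def using \<open>x < r\<close> by simp
  qed
  define oo where "oo = (r \<in> R0 \<and> r \<notin> S')"
  have Lno: "L = R0" if "\<not> oo"
  proof
    show "L \<subseteq> R0" by (rule LR0)
    show "R0 \<subseteq> L"
    proof
      fix x assume x: "x \<in> R0"
      show "x \<in> L"
      proof (cases "x = r")
        case True
        then have "r \<in> S'" using that x unfolding oo_def by simp
        then show ?thesis unfolding L_def using True by simp
      next
        case False
        then show ?thesis using R0L x by blast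
      qed
    qed
  qed
  have Lo: "L = R0 - {r}" if oo
  proof
    show "R0 - {r} \<subseteq> L" by (rule R0L)
    show "L \<subseteq> R0 - {r}" using LR0 that unfolding oo_def L_def by blast
  qed
  have tL: "trm k S' x = trm k R0 x" if xL: "x \<in> L" for x
  proof (rule trm_cong)
    have xS: "x \<in> S'" and xr: "x \<le> r" using xL unfolding L_def by auto
    show "{y\<in>S'. y \<le> x} = {y\<in>R0. y \<le> x}"
    proof (cases "x < r")
      case True
      have "{y\<in>S'. y \<le> x} = {y\<in>{y\<in>S'. y < r}. y \<le> x}" using True by auto
      also have "\<dots> = {y\<in>{y\<in>R0. y < r}. y \<le> x}" using bel by simp
      also have "\<dots> = {y\<in>R0. y \<le> x}" using True by auto
      finally show ?thesis .
    next
      case False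
      then have xr': "x = r" using xr by simp
      then have "\<not> oo" unfolding oo_def using xS by simp
      then have "L = R0" by (rule Lno)
      then have "{y\<in>S'. y \<le> r} = R0" unfolding L_def by simp
      moreover have "{y\<in>R0. y \<le> r} = R0" using r_ge by auto
      ultimately show ?thesis using xr' by simp
    qed
  qed
  have tS: "trm k ?S x = trm k R0 x" if "x \<in> R0" for x
    by (rule trm_cong) (use that rng0 in auto)
  have idxtop: "idx ?S (Suc j) = Suc n"
  proof -
    have "{y\<in>?S. y \<le> Suc j} = ?S" using rng0 by auto
    then show ?thesis unfolding idx_def using cardS by simp
  qed
  have gaptop: "gap ?S (Suc j) = u" unfolding gap_def gpred_top u_def by simp
  have km: "k + 2 - Suc n = m" unfolding m_def using n_le by simp
  have PsiS: "Psi k ?S = (\<Sum>x\<in>R0. trm k R0 x) + wt m * (real u)\<^sup>2"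
  proof -
    have "Psi k ?S = trm k ?S (Suc j) + (\<Sum>x\<in>R0. trm k ?S x)" unfolding Psi_def using fin0 nj by simp
    also have "(\<Sum>x\<in>R0. trm k ?S x) = (\<Sum>x\<in>R0. trm k R0 x)" using tS by (rule sum.cong[OF refl])
    also have "trm k ?S (Suc j) = wt m * (real u)\<^sup>2" unfolding trm_def idxtop gaptop km ..
    finally show ?thesis by simp
  qed
  define NEW where "NEW = (\<Sum>x\<in>F. trm k S' x)"
  have PsiS': "Psi k S' = (\<Sum>x\<in>L. trm k R0 x) + NEW"
  proof -
    have "Psi k S' = (\<Sum>x\<in>L. trm k S' x) + NEW" unfolding Psi_def NEW_def SLF(1)
      using sum.union_disjoint[OF finLF SLF(2)] SLF(1) by simp
    also have "(\<Sum>x\<in>L. trm k S' x) = (\<Sum>x\<in>L. trm k R0 x)" using tL by (rule sum.cong[OF refl])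
    finally show ?thesis .
  qed
  have NEWle: "NEW \<le> (\<Sum>x\<in>F. (real (gap S' x))\<^sup>2)" unfolding NEW_def by (rule sum_mono) (rule trm_le)
  have NEWnn: "0 \<le> NEW" unfolding NEW_def by (simp add: sum_nonneg trm_nonneg)
  define q where "q = Max (insert 0 L)"
  have qc: "q \<in> L \<or> q = 0" unfolding q_def using finLF(1) Max_in[of "insert 0 L"] by auto
  have qge: "x \<le> q" if "x \<in> L" for x unfolding q_def using finLF(1) that by simp
  have qr: "q \<le> r" using qc unfolding L_def by auto
  have Lq: "{y\<in>S'. y \<le> q} = L" unfolding L_def using qr qge unfolding L_def by force
  have sumS': "(\<Sum>x\<in>S'. gap S' x) + card S' = j"
  proof -
    have "{y\<in>S'. y \<le> j} = S'" using rng by auto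
    then show ?thesis using prefix_sum[OF fin z, of j] jS by simp
  qed
  have sumL: "(\<Sum>x\<in>L. gap S' x) + card L = q"
  proof -
    have "q \<in> S' \<or> q = 0" using qc unfolding L_def by auto
    then show ?thesis using prefix_sum[OF fin z, of q] Lq by simp
  qed
  have sumF: "(\<Sum>x\<in>F. gap S' x) + card F + q = j"
  proof -
    have "(\<Sum>x\<in>S'. gap S' x) = (\<Sum>x\<in>L. gap S' x) + (\<Sum>x\<in>F. gap S' x)"
      unfolding SLF(1) using sum.union_disjoint[OF finLF SLF(2)] SLF(1) by simp
    moreover have "card S' = card L + card F" unfolding SLF(1) using card_Un_disjoint[OF finLF SLF(2)] SLF(1) by simp
    ultimately show ?thesis using sumS' sumL by linarith
  qed
  have qno: "q = r" if "\<not> oo"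
  proof -
    have "L = R0" using Lno[OF that] .
    then show ?thesis unfolding q_def r_def by simp
  qed
  have cardL_no: "card L = n" if "\<not> oo" using Lno[OF that] unfolding n_def by simp
  have cardL_o: "card L + 1 = n" if oo
  proof -
    have "r \<in> R0" using that unfolding oo_def by simp
    moreover have "0 < card R0" using fin0 \<open>r \<in> R0\<close> card_gt_0_iff by blast
    ultimately show ?thesis using Lo[OF that] fin0 unfolding n_def by (simp add: card_Diff_singleton_if)
  qed
  have cF_le: "card F \<le> u"
  proof -
    have "F \<subseteq> {r<..j}" unfolding F_def using rng by auto
    then have "card F \<le> card {r<..j}" by (rule card_mono[rotated]) simp
    then show ?thesis unfolding u_def by simp
  qed
  have linS: "Phi k ?S = Psi k ?S + 2 * real j - real n"
    unfolding Phi_def maxS cardS by simp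
  have linS': "Phi k S' = Psi k S' + 2 * real j - real (card S') - 1"
    unfolding Phi_def maxS' by simp
  show ?thesis
  proof (cases "n + u \<le> k")
    case True
    then have cS'': "card S' = n + u" using cS by simp
    have no: "\<not> oo"
    proof
      assume oo
      then have "card L + 1 = n" by (rule cardL_o)
      then have "card S' \<le> n - 1 + u" using cF_le SLF card_Un_disjoint[OF finLF SLF(2)] by simp
      moreover have "1 \<le> n" using \<open>card L + 1 = n\<close> by simp
      ultimately show False using cS'' by simp
    qed
    have cF: "card F = u" using cS'' cardL_no[OF no] card_Un_disjoint[OF finLF SLF(2)] SLF(1) by simp
    have "(\<Sum>x\<in>F. gap S' x) = 0" using sumF cF qno[OF no] unfolding u_def using r_le_j by simp
    then have g0: "\<forall>x\<in>F. gap S' x = 0" using finLF(2) by simp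
    have "NEW = 0" unfolding NEW_def trm_def using g0 by simp
    have "Psi k S' = (\<Sum>x\<in>R0. trm k R0 x)" using PsiS' \<open>NEW = 0\<close> Lno[OF no] by simp
    then have "Psi k S' \<le> Psi k ?S" using PsiS wt_nonneg by simp
    then show ?thesis using linS linS' cS'' by simp
  next
    case False
    then have cS'': "card S' = k" using cS by simp
    have um: "m \<le> u" using False unfolding m_def by simp
    have sumR0: "(\<Sum>x\<in>R0. trm k R0 x) = (\<Sum>x\<in>L. trm k R0 x) + (if oo then trm k R0 r else 0)"
    proof (cases oo)
      case True
      have rR0: "r \<in> R0" using True unfolding oo_def by simp
      have "(\<Sum>x\<in>R0. trm k R0 x) = trm k R0 r + (\<Sum>x\<in>R0 - {r}. trm k R0 x)"
        using sum.remove[OF fin0 rR0] .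
      then show ?thesis using Lo[OF True] True by simp
    next
      case False
      then show ?thesis using Lno[OF False] by simp
    qed
    have diff: "Psi k ?S - Psi k S' = wt m * (real u)\<^sup>2 + (if oo then trm k R0 r else 0) - NEW"
      using PsiS PsiS' sumR0 by simp
    have goal: "real u + 1 - real m \<le> wt m * (real u)\<^sup>2 + (if oo then trm k R0 r else 0) - NEW"
    proof (cases "m < 40")
      case mlt: True
      have w1: "wt m = 1" using mlt wt_small by simp
      show ?thesis
      proof (cases oo)
        case False
        have cF: "card F + 1 = m" using cS'' cardL_no[OF False] card_Un_disjoint[OF finLF SLF(2)] SLF(1)
          unfolding m_def using n_le by simp
        have sF: "(\<Sum>x\<in>F. gap S' x) + 1 \<le> u"
          using sumF cF qno[OF False] m_ge2 unfolding u_def by simp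
        have "NEW \<le> (\<Sum>x\<in>F. (real (gap S' x))\<^sup>2)" by (rule NEWle)
        also have "\<dots> \<le> (\<Sum>x\<in>F. real (gap S' x))\<^sup>2" by (rule sum_sq_le[OF finLF(2)])
        also have "\<dots> \<le> (real u - 1)\<^sup>2"
        proof -
          have e: "(\<Sum>x\<in>F. real (gap S' x)) = real (\<Sum>x\<in>F. gap S' x)" by (rule of_nat_sum[symmetric])
          have "real ((\<Sum>x\<in>F. gap S' x) + 1) \<le> real u" using sF by (simp only: of_nat_le_iff)
          then have h: "real (\<Sum>x\<in>F. gap S' x) \<le> real u - 1" by simp
          show ?thesis unfolding e by (rule power_mono[OF h]) (simp add: sum_nonneg)
        qed
        finally have N: "NEW \<le> (real u - 1)\<^sup>2" .
        have E: "(real u - 1)\<^sup>2 = (real u)\<^sup>2 - 2 * real u + 1" by (simp add: power2_eq_square algebra_simps)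
        have M: "2 \<le> real m" using m_ge2 by simp
        have X: "(if oo then trm k R0 r else 0) = 0" using False by simp
        show ?thesis unfolding w1 X using N E M by linarith
      next
        case True
        have rR0: "r \<in> R0" using True unfolding oo_def by simp
        have rS': "r \<notin> S'" using True unfolding oo_def by simp
        have cF: "card F = m" using cS'' cardL_o[OF True] card_Un_disjoint[OF finLF SLF(2)] SLF(1)
          unfolding m_def using n_le by simp
        define d where "d = gap R0 r"
        have qg: "q = gpred R0 r"
        proof -
          have "{y\<in>R0. y < r} = R0 - {r}" using r_ge by force
          then show ?thesis unfolding q_def gpred_def Lo[OF True] by simp
        qed
        have r0: "0 < r" using rR0 rng0 by force
        have qr': "q < r" using qg gpred_lt[OF fin0 r0] by simp
        have dq: "d + q + 1 = r" unfolding d_def gap_def using qg qr' by simp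
        have idr: "idx R0 r = n"
        proof -
          have "{y\<in>R0. y \<le> r} = R0" using r_ge by blast
          then show ?thesis unfolding idx_def n_def by simp
        qed
        have trr: "trm k R0 r = wt (m + 1) * (real d)\<^sup>2"
        proof -
          have "k + 2 - idx R0 r = m + 1" using idr n_le unfolding m_def by simp
          then show ?thesis unfolding trm_def d_def by simp
        qed
        have w2: "wt (m + 1) = 1" using mlt wt_small by simp
        have Fne: "F \<noteq> {}" using cF m_ge2 by auto
        define f1 where "f1 = Min F"
        have f1F: "f1 \<in> F" unfolding f1_def using finLF(2) Fne by simp
        have f1min: "f1 \<le> x" if "x \<in> F" for x unfolding f1_def using finLF(2) that by simp
        have f1S: "f1 \<in> S'" and rf1: "r < f1" using f1F unfolding F_def by auto
        have gpf1: "gpred S' f1 = q"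
        proof (rule gpred_eqI[OF fin])
          show "q = 0 \<or> q \<in> S'" using qc unfolding L_def by auto
          show "q < f1" using qr rf1 by simp
          fix y assume yS: "y \<in> S'" and yf: "y < f1"
          then have "y \<notin> F" using f1min by force
          then have "y \<in> L" using yS SLF(1) by blast
          then show "y \<le> q" by (rule qge)
        qed
        define g1 where "g1 = gap S' f1"
        have g1e: "g1 + q + 1 = f1" unfolding g1_def gap_def gpf1 using qr rf1 by simp
        have g1u: "g1 + 1 \<le> u" unfolding g1_def using i6 f1S rf1 by simp
        have g1d: "d + 1 \<le> g1" using g1e dq rf1 by simp
        define rest where "rest = (\<Sum>x\<in>F - {f1}. gap S' x)"
        have srest: "(\<Sum>x\<in>F. gap S' x) = g1 + rest" unfolding rest_def g1_def using sum.remove[OF finLF(2) f1F] .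
        have rest_le: "rest + 1 + g1 \<le> u + d"
        proof -
          have "g1 + rest + m + q = j" using sumF srest cF by simp
          then show ?thesis using dq m_ge2 unfolding u_def by simp
        qed
        have "NEW \<le> (\<Sum>x\<in>F. (real (gap S' x))\<^sup>2)" by (rule NEWle)
        also have "\<dots> = (real g1)\<^sup>2 + (\<Sum>x\<in>F - {f1}. (real (gap S' x))\<^sup>2)"
          unfolding g1_def using sum.remove[OF finLF(2) f1F] .
        also have "(\<Sum>x\<in>F - {f1}. (real (gap S' x))\<^sup>2) \<le> (\<Sum>x\<in>F - {f1}. real (gap S' x))\<^sup>2"
          using sum_sq_le finLF(2) by blast
        also have "(\<Sum>x\<in>F - {f1}. real (gap S' x)) = real rest" unfolding rest_def by simp
        finally have N1: "NEW \<le> (real g1)\<^sup>2 + (real rest)\<^sup>2" by simp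
        have "(real g1)\<^sup>2 + (real rest)\<^sup>2 \<le> (real u - 1)\<^sup>2 + (real d)\<^sup>2"
        proof (rule alg1)
          show "real d + 1 \<le> real g1" using g1d by simp
          show "real g1 \<le> real u - 1" using g1u by simp
          show "0 \<le> real rest" by simp
          show "real rest \<le> real u + real d - 1 - real g1" using rest_le by simp
          show "0 \<le> real d" by simp
        qed
        then have A: "(real g1)\<^sup>2 + (real rest)\<^sup>2 \<le> (real u - 1)\<^sup>2 + (real d)\<^sup>2" .
        have E: "(real u - 1)\<^sup>2 = (real u)\<^sup>2 - 2 * real u + 1" by (simp add: power2_eq_square algebra_simps)
        have M: "2 \<le> real m" using m_ge2 by simp
        have X: "(if oo then trm k R0 r else 0) = (real d)\<^sup>2" using True trr w2 by simp
        show ?thesis unfolding w1 X using N1 A E M by linarith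
      qed
    next
      case mge: False
      then have m40: "40 \<le> m" by simp
      have wm: "wt m = 40 / real m" using wt_big m40 by simp
      have mpos: "0 < real m" using m40 by simp
      have cFm: "card F \<le> m"
      proof -
        have "card L + card F = k" using cS'' card_Un_disjoint[OF finLF SLF(2)] SLF(1) by simp
        moreover have "n \<le> card L + 1" using cardL_no cardL_o by (cases oo) auto
        ultimately show ?thesis unfolding m_def by simp
      qed
      have gb: "(real (gap S' x))\<^sup>2 \<le> 36 * (real u)\<^sup>2 / (real m)\<^sup>2" if xF: "x \<in> F" for x
      proof -
        have xS: "x \<in> S'" and rx: "r < x" using xF unfolding F_def by auto
        have h: "(m - 2) * gap S' x \<le> 2 * u + (m - 2)" using i6 xS rx by simp
        have h': "real (m - 2) * real (gap S' x) \<le> 2 * real u + real (m - 2)"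
        proof -
          have "real ((m - 2) * gap S' x) \<le> real (2 * u + (m - 2))" using h by (simp only: of_nat_le_iff)
          then show ?thesis by simp
        qed
        have m2: "real (m - 2) = real m - 2" using m40 by simp
        have "real m * real (gap S' x) \<le> 6 * real u"
        proof -
          have "real m * real (gap S' x) \<le> 2 * ((real m - 2) * real (gap S' x))"
            using mult_nonneg_nonneg[of "real m - 4" "real (gap S' x)"] m40 by (simp add: algebra_simps)
          also have "\<dots> \<le> 2 * (2 * real u + (real m - 2))" using h' m2 by simp
          also have "\<dots> \<le> 6 * real u" using um by simp
          finally show ?thesis .
        qed
        then have "real (gap S' x) \<le> 6 * real u / real m" using mpos by (simp add: field_simps)
        then have "(real (gap S' x))\<^sup>2 \<le> (6 * real u / real m)\<^sup>2" by (intro power_mono) auto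
        also have "\<dots> = 36 * (real u)\<^sup>2 / (real m)\<^sup>2" by (simp add: power_divide power_mult_distrib)
        finally show ?thesis .
      qed
      have "(\<Sum>x\<in>F. (real (gap S' x))\<^sup>2) \<le> (\<Sum>x\<in>F. 36 * (real u)\<^sup>2 / (real m)\<^sup>2)"
        by (rule sum_mono) (rule gb)
      then have "NEW \<le> (\<Sum>x\<in>F. 36 * (real u)\<^sup>2 / (real m)\<^sup>2)" using NEWle by linarith
      also have "\<dots> = real (card F) * (36 * (real u)\<^sup>2 / (real m)\<^sup>2)" by simp
      also have "\<dots> \<le> real m * (36 * (real u)\<^sup>2 / (real m)\<^sup>2)" using cFm by (intro mult_right_mono) auto
      also have "\<dots> = 36 * (real u)\<^sup>2 / real m" using mpos by (simp add: power2_eq_square field_simps)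
      finally have N: "NEW \<le> 36 * (real u)\<^sup>2 / real m" .
      have Z: "4 * real u \<le> 4 * (real u)\<^sup>2 / real m"
      proof -
        have "real m * real u \<le> real u * real u" using um by (simp add: mult_right_mono)
        then show ?thesis using mpos by (simp add: field_simps power2_eq_square)
      qed
      have W: "wt m * (real u)\<^sup>2 = 40 * (real u)\<^sup>2 / real m" using wm by simp
      have I: "0 \<le> (if oo then trm k R0 r else 0)" using trm_nonneg by simp
      have sp: "40 * (real u)\<^sup>2 / real m = 36 * (real u)\<^sup>2 / real m + 4 * (real u)\<^sup>2 / real m"
        by (simp add: add_divide_distrib[symmetric])
      have m1: "1 \<le> real m" using m40 by simp
      have u0: "0 \<le> real u" by simp
      show ?thesis unfolding W using Z I sp N m1 u0 by linarith
    qed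
    have rm: "real m = real k + 1 - real n" using n_le unfolding m_def by (simp add: of_nat_diff)
    show ?thesis using goal diff linS linS' cS'' rm by simp
  qed
qed


lemma first_bound:
  assumes R0e: "R0 = {}" and si: "sinv S' j" and cS: "card S' = min k (n + u)" and j1: "1 \<le> j"
  shows "Psi k S' \<le> 36 * (real j)\<^sup>2 / (real k)\<^sup>2 * (\<Sum>\<sigma>\<in>{2..k+1}. wt \<sigma>)"
proof -
  note D = sinvD[OF si]
  have fin: "finite S'" and rng: "\<forall>x\<in>S'. 1 \<le> x \<and> x \<le> j" and jc: "j \<in> S' \<or> (j = 0 \<and> S' = {})"
    and i6: "\<forall>x\<in>S'. r < x \<longrightarrow> gap S' x + 1 \<le> u \<and> (m - 2) * gap S' x \<le> 2 * u + (m - 2)"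
    using D by simp_all
  have jS: "j \<in> S'" using jc j1 by simp
  have z: "0 \<notin> S'" using rng by auto
  have r0: "r = 0" using R0e unfolding r_def by simp
  have n0: "n = 0" using R0e unfolding n_def by simp
  have uj: "u = j" unfolding u_def r0 by simp
  have mk: "m = k + 1" unfolding m_def n0 by simp
  have sumS': "(\<Sum>x\<in>S'. gap S' x) + card S' = j"
  proof -
    have "{y\<in>S'. y \<le> j} = S'" using rng by auto
    then show ?thesis using prefix_sum[OF fin z, of j] jS by simp
  qed
  have ssum0: "0 \<le> (\<Sum>\<sigma>\<in>{2..k+1}. wt \<sigma>)" by (simp add: sum_nonneg wt_nonneg)
  show ?thesis
  proof (cases "j \<le> k")
    case True
    then have "card S' = j" using cS n0 uj by simp
    then have "(\<Sum>x\<in>S'. gap S' x) = 0" using sumS' by simp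
    then have "\<forall>x\<in>S'. gap S' x = 0" using fin by simp
    then have "Psi k S' = 0" unfolding Psi_def trm_def by simp
    then show ?thesis using ssum0 by simp
  next
    case False
    then have cS': "card S' = k" using cS n0 uj by simp
    have kpos: "0 < real k" using k2 by simp
    have gb: "(real (gap S' x))\<^sup>2 \<le> 36 * (real j)\<^sup>2 / (real k)\<^sup>2" if xS: "x \<in> S'" for x
    proof -
      have rx: "r < x" using rng xS r0 by auto
      have h: "(k - 1) * gap S' x \<le> 2 * j + (k - 1)" using i6 xS rx mk uj by simp
      have h': "real (k - 1) * real (gap S' x) \<le> 2 * real j + real (k - 1)"
      proof -
        have "real ((k - 1) * gap S' x) \<le> real (2 * j + (k - 1))" using h by (simp only: of_nat_le_iff)
        then show ?thesis by simp
      qed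
      have k1: "real (k - 1) = real k - 1" using k2 by simp
      have "real k * real (gap S' x) \<le> 6 * real j"
      proof -
        have "real k * real (gap S' x) \<le> 2 * ((real k - 1) * real (gap S' x))"
          using mult_nonneg_nonneg[of "real k - 2" "real (gap S' x)"] k2 by (simp add: algebra_simps)
        also have "\<dots> \<le> 2 * (2 * real j + (real k - 1))" using h' k1 by simp
        also have "\<dots> \<le> 6 * real j" using False by simp
        finally show ?thesis .
      qed
      then have "real (gap S' x) \<le> 6 * real j / real k" using kpos by (simp add: field_simps)
      then have "(real (gap S' x))\<^sup>2 \<le> (6 * real j / real k)\<^sup>2" by (intro power_mono) auto
      also have "\<dots> = 36 * (real j)\<^sup>2 / (real k)\<^sup>2" by (simp add: power_divide power_mult_distrib)
      finally show ?thesis .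
    qed
    define h where "h x = k + 2 - idx S' x" for x
    have idx_pos: "1 \<le> idx S' x" if "x \<in> S'" for x
    proof -
      have "x \<in> {y\<in>S'. y \<le> x}" using that by simp
      then have "{y\<in>S'. y \<le> x} \<noteq> {}" by blast
      then show ?thesis unfolding idx_def using fin by (simp add: Suc_le_eq card_gt_0_iff)
    qed
    have idx_le: "idx S' x \<le> k" for x
    proof -
      have "idx S' x \<le> card S'" unfolding idx_def by (rule card_mono[OF fin]) auto
      then show ?thesis using cS' by simp
    qed
    have idx_mono: "idx S' x < idx S' y" if "x \<in> S'" "y \<in> S'" "x < y" for x y
    proof -
      have sub: "{z\<in>S'. z \<le> x} \<subseteq> {z\<in>S'. z \<le> y}" using that by auto
      have ne: "{z\<in>S'. z \<le> x} \<noteq> {z\<in>S'. z \<le> y}"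
      proof
        assume e: "{z\<in>S'. z \<le> x} = {z\<in>S'. z \<le> y}"
        have "y \<in> {z\<in>S'. z \<le> y}" using that by simp
        then have "y \<in> {z\<in>S'. z \<le> x}" using e by simp
        then show False using that by simp
      qed
      have "{z\<in>S'. z \<le> x} \<subset> {z\<in>S'. z \<le> y}" using sub ne by blast
      then show ?thesis unfolding idx_def by (rule psubset_card_mono[rotated]) (use fin in simp)
    qed
    have injh: "inj_on h S'"
    proof (rule inj_onI)
      fix x y assume x: "x \<in> S'" and y: "y \<in> S'" and e: "h x = h y"
      have "idx S' x = idx S' y" using e idx_le[of x] idx_le[of y] unfolding h_def by simp
      show "x = y"
      proof (rule ccontr)
        assume "x \<noteq> y"
        then have "x < y \<or> y < x" by linarith
        then show False using idx_mono[OF x y] idx_mono[OF y x] \<open>idx S' x = idx S' y\<close> by auto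
      qed
    qed
    have himg: "h ` S' \<subseteq> {2..k+1}"
    proof
      fix s assume "s \<in> h ` S'"
      then obtain x where x: "x \<in> S'" and s: "s = h x" by auto
      show "s \<in> {2..k+1}" using idx_pos[OF x] idx_le[of x] unfolding s h_def atLeastAtMost_iff by arith
    qed
    have "Psi k S' = (\<Sum>x\<in>S'. wt (h x) * (real (gap S' x))\<^sup>2)" unfolding Psi_def trm_def h_def ..
    also have "\<dots> \<le> (\<Sum>x\<in>S'. wt (h x) * (36 * (real j)\<^sup>2 / (real k)\<^sup>2))"
      by (rule sum_mono) (rule mult_left_mono[OF gb wt_nonneg])
    also have "\<dots> = 36 * (real j)\<^sup>2 / (real k)\<^sup>2 * (\<Sum>x\<in>S'. wt (h x))" by (rule trans[OF sum_distrib_right[symmetric] mult.commute])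
    finally have P: "Psi k S' \<le> 36 * (real j)\<^sup>2 / (real k)\<^sup>2 * (\<Sum>x\<in>S'. wt (h x))" .
    have "(\<Sum>x\<in>S'. wt (h x)) = (\<Sum>\<sigma>\<in>h ` S'. wt \<sigma>)" using sum.reindex[OF injh, of wt] by simp
    also have "\<dots> \<le> (\<Sum>\<sigma>\<in>{2..k+1}. wt \<sigma>)" by (rule sum_mono2[OF _ himg]) (simp_all add: wt_nonneg)
    finally have S1: "(\<Sum>x\<in>S'. wt (h x)) \<le> (\<Sum>\<sigma>\<in>{2..k+1}. wt \<sigma>)" .
    have c0: "0 \<le> 36 * (real j)\<^sup>2 / (real k)\<^sup>2" by simp
    have "36 * (real j)\<^sup>2 / (real k)\<^sup>2 * (\<Sum>x\<in>S'. wt (h x)) \<le> 36 * (real j)\<^sup>2 / (real k)\<^sup>2 * (\<Sum>\<sigma>\<in>{2..k+1}. wt \<sigma>)"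
      by (rule mult_left_mono[OF S1 c0])
    then show ?thesis using P by linarith
  qed
qed

end

lemma harm_ln: "1 \<le> N \<Longrightarrow> (\<Sum>\<sigma>\<in>{2..N}. 1 / real \<sigma>) \<le> ln (real N)"
proof (induction N rule: dec_induct)
  case base then show ?case by simp
next
  case (step N)
  have N0: "0 < real N" using step.hyps by simp
  have e: "{2..Suc N} = insert (Suc N) {2..N}" using step.hyps by auto
  have "(\<Sum>\<sigma>\<in>{2..Suc N}. 1 / real \<sigma>) = 1 / real (Suc N) + (\<Sum>\<sigma>\<in>{2..N}. 1 / real \<sigma>)"
    unfolding e by simp
  also have "\<dots> \<le> 1 / real (Suc N) + ln (real N)" using step.IH by simp
  also have "\<dots> \<le> ln (real (Suc N))"
  proof -
    have q: "0 < real N / real (Suc N)" using N0 by simp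
    have "ln (real N / real (Suc N)) \<le> real N / real (Suc N) - 1" using ln_le_minus_one[OF q] .
    moreover have "ln (real N / real (Suc N)) = ln (real N) - ln (real (Suc N))" using N0 by (simp add: ln_div)
    moreover have "real N / real (Suc N) - 1 = - (1 / real (Suc N))" by (simp add: field_simps)
    ultimately show ?thesis by linarith
  qed
  finally show ?case .
qed

lemma wt_sum_bound:
  assumes "2 \<le> k"
  shows "(\<Sum>\<sigma>\<in>{2..k+1}. wt \<sigma>) \<le> 80 * ln (real k)"
proof -
  have "(\<Sum>\<sigma>\<in>{2..k+1}. wt \<sigma>) \<le> (\<Sum>\<sigma>\<in>{2..k+1}. 40 * (1 / real \<sigma>))"
  proof (rule sum_mono)
    fix s assume "s \<in> {2..k+1}"
    then have s0: "0 < real s" by simp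
    have "real s \<le> real (max s 40)" by simp
    then have "40 / real (max s 40) \<le> 40 / real s" using s0 by (intro divide_left_mono) auto
    then show "wt s \<le> 40 * (1 / real s)" unfolding wt_def by simp
  qed
  also have "\<dots> = 40 * (\<Sum>\<sigma>\<in>{2..k+1}. 1 / real \<sigma>)" by (simp add: sum_distrib_left)
  also have "\<dots> \<le> 40 * ln (real (k + 1))" using harm_ln[of "k+1"] by simp
  also have "\<dots> \<le> 80 * ln (real k)"
  proof -
    have k0: "0 < real k" using assms by simp
    have "real (k + 1) \<le> (real k)\<^sup>2"
    proof -
      have k2r: "2 \<le> real k" using assms by simp
      have "2 * real k \<le> real k * real k" using k2r by (intro mult_right_mono) auto
      then have "real k + 1 \<le> real k * real k" using k2r by linarith
      then show ?thesis by (simp add: power2_eq_square)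
    qed
    then have "ln (real (k + 1)) \<le> ln ((real k)\<^sup>2)" by (intro ln_mono) auto
    also have "\<dots> = 2 * ln (real k)" using k0 by (simp add: ln_realpow)
    finally show ?thesis by simp
  qed
  finally show ?thesis .
qed

lemma run_bound:
  assumes "dtr_run k j R c"
  shows "stp k j R \<Longrightarrow> real c \<le> Phi k (insert (Suc j) R)"
  using assms
proof (induction rule: dtr_run.induct)
  case (run_done k R)
  then have "R = {}" unfolding stp_def by auto
  then have "Phi k (insert (Suc 0) R) = Psi k {1}" unfolding Phi_def by simp
  then show ?case using Psi_nonneg by simp
next
  case (run_step j k R R1 c1 c2)
  interpret stp k j R by (rule run_step.prems)
  obtain S' where R1: "R1 = S' - {j}" and si: "sinv S' j" and cS: "card S' = min k (n + u)" and c1: "c1 = Suc u"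
    using sinv_grad[OF run_step.hyps(2)] by blast
  note D = sinvD[OF si]
  have jS: "j \<in> S'" using D(3) run_step.hyps(1) by auto
  have fin: "finite S'" using D(1) .
  have S'eq: "insert (Suc (j - 1)) R1 = S'" using R1 jS run_step.hyps(1) by auto
  have st: "stp k (j - 1) R1"
  proof
    show "2 \<le> k" using k2 .
    show "finite R1" using fin R1 by simp
    show "\<forall>x\<in>R1. 1 \<le> x \<and> x \<le> j - 1" using D(2) R1 by force
    have "card R1 + 1 = card S'"
    proof -
      have p: "0 < card S'" using fin jS card_gt_0_iff by blast
      have "card R1 = card S' - 1" using R1 jS fin by (simp add: card_Diff_singleton_if)
      then show ?thesis using p by simp
    qed
    then show "card R1 + 1 \<le> k" using cS by simp
    show "INV2 (insert (Suc (j - 1)) R1)" using S'eq D(6) by simp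
  qed
  have "real c2 \<le> Phi k S'" using run_step.IH st S'eq by simp
  moreover have "real (Suc u) + Phi k S' \<le> Phi k (insert (Suc j) R)"
    using step_ineq[OF si cS run_step.hyps(1)] .
  ultimately show ?case using c1 by simp
qed

lemma alloc_fin: "alloc k j lock R R' \<Longrightarrow> finite R \<Longrightarrow> finite R'"
  by (induction rule: alloc.induct) (auto simp: evict_step_def)

lemma alloc_ex: "finite R \<Longrightarrow> 1 \<le> k \<Longrightarrow> \<exists>R'. alloc k j lock R R'"
proof (induction "card R" arbitrary: R rule: less_induct)
  case less
  show ?case
  proof (cases "card R \<le> k")
    case True then show ?thesis using alloc_done by blast
  next
    case False
    have "2 \<le> card R" using False less.prems(2) by simp
    moreover have "card R - card {lock} \<le> card (R - {lock})" by (rule diff_card_le_card_Diff) simp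
    ultimately have "1 \<le> card (R - {lock})" by simp
    then have "R - {lock} \<noteq> {}" by (metis card.empty not_one_le_zero)
    then obtain t0 where "t0 \<in> R - {lock}" by blast
    then obtain t where tA: "t \<in> R - {lock}" and tm: "\<forall>v. v \<in> R - {lock} \<longrightarrow> escore j R t \<le> escore j R v"
      using ex_has_least_nat[of "\<lambda>x. x \<in> R - {lock}" t0 "escore j R"] by blast
    have ev: "evict_step j lock R (R - {t})" unfolding evict_step_def using tA tm by blast
    have tR: "t \<in> R" using tA by simp
    have "card (R - {t}) < card R" using card_Diff1_less[OF less.prems(1) tR] .
    then obtain R2 where "alloc k j lock (R - {t}) R2" using less.hyps less.prems by auto
    then show ?thesis using alloc_evict[of k R j lock "R - {t}" R2] False ev by auto
  qed
qed

lemma mat_ex: "finite R \<Longrightarrow> 1 \<le> k \<Longrightarrow> \<exists>R' c. mat k j i R R' c \<and> finite R'"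
proof (induction i)
  case 0 then show ?case using mat_res by blast
next
  case (Suc i)
  show ?case
  proof (cases "Suc i \<in> R")
    case True then show ?thesis using mat_res Suc.prems by blast
  next
    case False
    obtain R1 c where m1: "mat k j i R R1 c" and f1: "finite R1" using Suc by blast
    obtain R2 where a2: "alloc k j i R1 R2" using alloc_ex[OF f1 Suc.prems(2)] by blast
    have "mat k j (Suc i) R (insert (Suc i) R2) (Suc c)"
      using mat_comp[of "Suc i" R k j R1 c R2] False m1 a2 by simp
    moreover have "finite (insert (Suc i) R2)" using alloc_fin[OF a2 f1] by simp
    ultimately show ?thesis by blast
  qed
qed

lemma run_ex: "finite R \<Longrightarrow> 1 \<le> k \<Longrightarrow> \<exists>c. dtr_run k j R c"
proof (induction j arbitrary: R)
  case 0 then show ?case using run_done by blast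
next
  case (Suc j)
  obtain R1 c where m1: "mat k (Suc j) (Suc j) R R1 c" and f1: "finite R1" using mat_ex Suc.prems by blast
  obtain R2 where a2: "alloc k (Suc j) (Suc j) R1 R2" using alloc_ex[OF f1 Suc.prems(2)] by blast
  have g: "grad_step k (Suc j) R (R2 - {Suc j}) (Suc c)" using grad_step.intros[OF m1 a2] .
  have "finite (R2 - {Suc j})" using alloc_fin[OF a2 f1] by simp
  then obtain c2 where "dtr_run k j (R2 - {Suc j}) c2" using Suc.IH Suc.prems(2) by blast
  then have "dtr_run k (Suc j) R (Suc c + c2)" using run_step[of "Suc j" k R "R2 - {Suc j}" "Suc c" c2] g by simp
  then show ?case by blast
qed

theorem lemma2:
  "\<exists>C::real. C > 0 \<and>
     (\<forall>(L::nat) (k::nat). k \<ge> 2 \<longrightarrow>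
        (\<exists>c. dtr_run k L {} c) \<and>
        (\<forall>c. dtr_run k L {} c \<longrightarrow>
           real c \<le> C * (real L + (real L)\<^sup>2 / (real k)\<^sup>2 * ln (real k))))"
proof (rule exI[of _ 2880], intro conjI allI impI)
  show "(0::real) < 2880" by simp
  fix L k :: nat assume k2: "2 \<le> k"
  show "\<exists>c. dtr_run k L {} c" using run_ex[of "{}" k L] k2 by simp
  fix c assume run: "dtr_run k L {} c"
  have lnk: "0 \<le> ln (real k)" using k2 by simp
  have T0: "0 \<le> (real L)\<^sup>2 / (real k)\<^sup>2 * ln (real k)" using lnk by simp
  show "real c \<le> 2880 * (real L + (real L)\<^sup>2 / (real k)\<^sup>2 * ln (real k))"
  proof (cases "L = 0")
    case True
    have "dtr_run k 0 {} c" using run True by simp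
    then have "c = 0" by (cases rule: dtr_run.cases) auto
    then show ?thesis using True by simp
  next
    case False
    then have L1: "1 \<le> L" by simp
    obtain R1 c1 c2 where g: "grad_step k L {} R1 c1" and r2: "dtr_run k (L - 1) R1 c2" and c: "c = c1 + c2"
      using run False by (cases rule: dtr_run.cases) auto
    interpret stp k L "{}"
    proof
      show "2 \<le> k" by (rule k2)
      show "finite ({}::nat set)" by simp
      show "\<forall>x\<in>{}. 1 \<le> x \<and> x \<le> L" by simp
      show "card ({}::nat set) + 1 \<le> k" using k2 by simp
      show "INV2 (insert (Suc L) {})" unfolding INV2_def by simp
    qed
    have uL: "u = L" unfolding u_def r_def by simp
    obtain S' where R1: "R1 = S' - {L}" and si: "sinv S' L" and cS: "card S' = min k (n + u)" and c1: "c1 = Suc u"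
      using sinv_grad[OF g] by blast
    note D = sinvD[OF si]
    have jS: "L \<in> S'" using D(3) L1 by auto
    have fin: "finite S'" using D(1) .
    have S'eq: "insert (Suc (L - 1)) R1 = S'" using R1 jS L1 by auto
    have st: "stp k (L - 1) R1"
    proof
      show "2 \<le> k" using k2 .
      show "finite R1" using fin R1 by simp
      show "\<forall>x\<in>R1. 1 \<le> x \<and> x \<le> L - 1" using D(2) R1 by force
      have "card R1 + 1 = card S'"
    proof -
      have p: "0 < card S'" using fin jS card_gt_0_iff by blast
      have "card R1 = card S' - 1" using R1 jS fin by (simp add: card_Diff_singleton_if)
      then show ?thesis using p by simp
    qed
      then show "card R1 + 1 \<le> k" using cS by simp
      show "INV2 (insert (Suc (L - 1)) R1)" using S'eq D(6) by simp
    qed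
    have c2b: "real c2 \<le> Phi k S'" using run_bound[OF r2 st] S'eq by simp
    have maxS': "Max S' = L" using fin jS D(2) by (intro Max_eqI) auto
    have "Phi k S' \<le> Psi k S' + 2 * real L" unfolding Phi_def maxS' by simp
    moreover have "Psi k S' \<le> 36 * (real L)\<^sup>2 / (real k)\<^sup>2 * (\<Sum>\<sigma>\<in>{2..k+1}. wt \<sigma>)"
      using first_bound[OF refl si cS L1] .
    moreover have "(\<Sum>\<sigma>\<in>{2..k+1}. wt \<sigma>) \<le> 80 * ln (real k)" using wt_sum_bound[OF k2] .
    moreover have "36 * (real L)\<^sup>2 / (real k)\<^sup>2 * (\<Sum>\<sigma>\<in>{2..k+1}. wt \<sigma>) \<le> 36 * (real L)\<^sup>2 / (real k)\<^sup>2 * (80 * ln (real k))"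
      by (rule mult_left_mono[OF wt_sum_bound[OF k2]]) simp
    ultimately have "Phi k S' \<le> 36 * (real L)\<^sup>2 / (real k)\<^sup>2 * (80 * ln (real k)) + 2 * real L"
      by linarith
    then have "real c \<le> real L + 1 + 36 * (real L)\<^sup>2 / (real k)\<^sup>2 * (80 * ln (real k)) + 2 * real L"
      using c c1 uL c2b by simp
    also have "36 * (real L)\<^sup>2 / (real k)\<^sup>2 * (80 * ln (real k)) = 2880 * ((real L)\<^sup>2 / (real k)\<^sup>2 * ln (real k))"
      by (simp add: algebra_simps)
    finally have "real c \<le> real L + 1 + 2880 * ((real L)\<^sup>2 / (real k)\<^sup>2 * ln (real k)) + 2 * real L" .
    moreover have "real L + 1 + 2 * real L \<le> 2880 * real L" using L1 by simp
    ultimately show ?thesis by (simp add: distrib_left)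
  qed
qed

end
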